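(* Let $S$ be a closed oriented surface of genus at least two, let $f\in\mathrm{Diff}_0(S)$, and let $x$ be an accumulation point of $\mathrm{Fix}(f)$. Fix local coordinates around $x$, let $U_\epsilon(x)$ be the open $\epsilon$-neighborhood of $x$ in these coordinates, and for points $p,q$ in the chart let $\alpha_{p,q}$ denote the straight line segment from $p$ to $q$. Then for all sufficiently small $\epsilon>0$: (1) if $y\in\mathrm{Fix}(f)\cap U_\epsilon(x)$ then $f(\alpha_{x,y})\subset U_\epsilon(x)$; (2) there is a neighborhood $W$ of $f$ in $\mathrm{Diff}_0(S)$ such that if $g\in W$, $p\notin\mathrm{Fix}(g)$ and $p,g(p)\in U_\epsilon(x)$, then $\alpha_{p,g(p)}\cap\mathrm{Fix}(g)=\emptyset$. In particular, for all $y\in\mathrm{Fix}(f)\cap U_\epsilon(x)$ the straight line homotopy between $\alpha_{x,y}$ and $f(\alpha_{x,y})$ is a homotopy rel $\mathrm{Fix}(f)$.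
   Context: $\mathrm{Diff}_0(S)$ is the group of $C^1$ diffeomorphisms of $S$ isotopic to the identity (with its $C^1$ topology). A homotopy $\alpha_t$ between paths with common endpoints is rel a closed set $K$ if endpoints stay fixed and whenever $\alpha_{t_0}(s)\in K$ one has $\alpha_t(s)=\alpha_{t_0}(s)$ for all $t$. *)

theory Defs
  imports "HOL-Analysis.Analysis" "HOL-Homology.Homology" "HOL-Algebra.Free_Abelian_Groups"
begin

type_synonym R2 = "real ^ 2"
type_synonym 'a chartT = "'a set \<times> ('a \<Rightarrow> R2)"

definition C1_on :: "R2 set \<Rightarrow> (R2 \<Rightarrow> R2) \<Rightarrow> bool" where
  "C1_on X h \<longleftrightarrow> (\<exists>D :: R2 \<Rightarrow> (R2 \<Rightarrow>\<^sub>L R2).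
      (\<forall>z\<in>X. (h has_derivative blinfun_apply (D z)) (at z)) \<and> continuous_on X D)"

definition is_chart :: "'a::topological_space set \<Rightarrow> ('a \<Rightarrow> R2) \<Rightarrow> bool" where
  "is_chart U \<phi> \<longleftrightarrow> open U \<and> open (\<phi> ` U) \<and> (\<exists>\<psi>. homeomorphism U (\<phi> ` U) \<phi> \<psi>)"

definition transition :: "'a chartT \<Rightarrow> 'a chartT \<Rightarrow> R2 \<Rightarrow> R2" where
  "transition c d = snd d \<circ> inv_into (fst c) (snd c)"

definition overlap_dom :: "'a chartT \<Rightarrow> 'a chartT \<Rightarrow> R2 set" where
  "overlap_dom c d = snd c ` (fst c \<inter> fst d)"

definition oriented_C1_atlas :: "'a::topological_space chartT set \<Rightarrow> bool" where
  "oriented_C1_atlas A \<longleftrightarrow>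
     (\<forall>c\<in>A. is_chart (fst c) (snd c)) \<and> (\<Union>(fst ` A) = UNIV) \<and>
     (\<forall>c\<in>A. \<forall>d\<in>A. C1_on (overlap_dom c d) (transition c d) \<and>
        (\<forall>z\<in>overlap_dom c d. det (matrix (frechet_derivative (transition c d) (at z))) > 0))"

definition compatible_chart :: "'a::topological_space chartT set \<Rightarrow> 'a chartT \<Rightarrow> bool" where
  "compatible_chart A c \<longleftrightarrow> is_chart (fst c) (snd c) \<and>
     (\<forall>d\<in>A. C1_on (overlap_dom c d) (transition c d) \<and> C1_on (overlap_dom d c) (transition d c))"

definition local_rep :: "'a chartT \<Rightarrow> 'a chartT \<Rightarrow> ('a \<Rightarrow> 'a) \<Rightarrow> R2 \<Rightarrow> R2" where
  "local_rep c d f = snd d \<circ> f \<circ> inv_into (fst c) (snd c)"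

definition C1_map :: "'a::topological_space chartT set \<Rightarrow> ('a \<Rightarrow> 'a) \<Rightarrow> bool" where
  "C1_map A f \<longleftrightarrow> continuous_on UNIV f \<and>
     (\<forall>c\<in>A. \<forall>d\<in>A. C1_on (snd c ` (fst c \<inter> f -` fst d)) (local_rep c d f))"

definition C1_diffeo :: "'a::topological_space chartT set \<Rightarrow> ('a \<Rightarrow> 'a) \<Rightarrow> bool" where
  "C1_diffeo A f \<longleftrightarrow> bij f \<and> C1_map A f \<and> C1_map A (inv_into UNIV f)"

(* Data for a subbasic C^1 neighbourhood (weak = strong C^1 topology, S compact):
   charts c,d in the atlas and a compact K inside the domain of c with f(K) inside d *)
definition C1_nbhd_data :: "'a::topological_space chartT set \<Rightarrow> ('a \<Rightarrow> 'a)
     \<Rightarrow> ('a chartT \<times> 'a chartT \<times> 'a set) set \<Rightarrow> real \<Rightarrow> bool" where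
  "C1_nbhd_data A f F \<epsilon> \<longleftrightarrow> finite F \<and> \<epsilon> > 0 \<and>
     (\<forall>(c, d, K)\<in>F. c \<in> A \<and> d \<in> A \<and> compact K \<and> K \<subseteq> fst c \<and> f ` K \<subseteq> fst d)"

definition C1_basic_nbhd :: "'a::topological_space chartT set \<Rightarrow> ('a \<Rightarrow> 'a)
     \<Rightarrow> ('a chartT \<times> 'a chartT \<times> 'a set) set \<Rightarrow> real \<Rightarrow> ('a \<Rightarrow> 'a) set" where
  "C1_basic_nbhd A f F \<epsilon> = {g. C1_diffeo A g \<and>
     (\<forall>(c, d, K)\<in>F. g ` K \<subseteq> fst d \<and>
        (\<forall>z\<in>snd c ` K.
           norm (local_rep c d g z - local_rep c d f z) < \<epsilon> \<and>
           onorm (\<lambda>v. frechet_derivative (local_rep c d g) (at z) v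
                     - frechet_derivative (local_rep c d f) (at z) v) < \<epsilon>))}"

definition Diff0 :: "'a::topological_space chartT set \<Rightarrow> ('a \<Rightarrow> 'a) set" where
  "Diff0 A = {f. C1_diffeo A f \<and>
     (\<exists>H :: real \<Rightarrow> 'a \<Rightarrow> 'a. H 0 = id \<and> H 1 = f \<and> (\<forall>t\<in>{0..1}. C1_diffeo A (H t)) \<and>
        (\<forall>t\<in>{0..1}. \<forall>F \<epsilon>. C1_nbhd_data A (H t) F \<epsilon> \<longrightarrow>
            (\<exists>\<delta>>0. \<forall>s\<in>{0..1}. \<bar>s - t\<bar> < \<delta> \<longrightarrow> H s \<in> C1_basic_nbhd A (H t) F \<epsilon>)))}"

definition C1_nbhd_in_Diff0 :: "'a::topological_space chartT set \<Rightarrow> ('a \<Rightarrow> 'a) \<Rightarrow> ('a \<Rightarrow> 'a) set \<Rightarrow> bool" where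
  "C1_nbhd_in_Diff0 A f W \<longleftrightarrow> W \<subseteq> Diff0 A \<and>
     (\<exists>F \<epsilon>. C1_nbhd_data A f F \<epsilon> \<and> C1_basic_nbhd A f F \<epsilon> \<inter> Diff0 A \<subseteq> W)"

(* closed oriented surface of genus g (g read off from H_1 = Z^(2g)) *)
definition closed_oriented_surface_genus :: "'a::t2_space chartT set \<Rightarrow> nat \<Rightarrow> bool" where
  "closed_oriented_surface_genus A g \<longleftrightarrow>
     compact (UNIV :: 'a set) \<and> connected (UNIV :: 'a set) \<and> oriented_C1_atlas A \<and>
     homology_group 1 (euclidean :: 'a topology) \<cong> free_Abelian_group {..<2 * g}"

definition Fix :: "('a \<Rightarrow> 'a) \<Rightarrow> 'a set" where
  "Fix f = {z. f z = z}"

definition chart_ball :: "'a chartT \<Rightarrow> 'a \<Rightarrow> real \<Rightarrow> 'a set" where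
  "chart_ball c x \<epsilon> = inv_into (fst c) (snd c) ` (ball (snd c x) \<epsilon> \<inter> snd c ` fst c)"

definition seg_path :: "'a chartT \<Rightarrow> 'a \<Rightarrow> 'a \<Rightarrow> real \<Rightarrow> 'a" where
  "seg_path c p q s = inv_into (fst c) (snd c) ((1 - s) *\<^sub>R snd c p + s *\<^sub>R snd c q)"

definition seg :: "'a chartT \<Rightarrow> 'a \<Rightarrow> 'a \<Rightarrow> 'a set" where
  "seg c p q = seg_path c p q ` {0..1}"

definition straight_homotopy :: "'a chartT \<Rightarrow> (real \<Rightarrow> 'a) \<Rightarrow> (real \<Rightarrow> 'a) \<Rightarrow> real \<Rightarrow> real \<Rightarrow> 'a" where
  "straight_homotopy c \<gamma>0 \<gamma>1 t s =
     inv_into (fst c) (snd c) ((1 - t) *\<^sub>R snd c (\<gamma>0 s) + t *\<^sub>R snd c (\<gamma>1 s))"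

definition homotopy_rel :: "'a::topological_space set \<Rightarrow> (real \<Rightarrow> 'a) \<Rightarrow> (real \<Rightarrow> 'a)
     \<Rightarrow> (real \<Rightarrow> real \<Rightarrow> 'a) \<Rightarrow> bool" where
  "homotopy_rel K \<gamma>0 \<gamma>1 H \<longleftrightarrow>
     continuous_on ({0..1} \<times> {0..1}) (\<lambda>(t, s). H t s) \<and>
     (\<forall>s\<in>{0..1}. H 0 s = \<gamma>0 s \<and> H 1 s = \<gamma>1 s) \<and>
     (\<forall>t\<in>{0..1}. H t 0 = \<gamma>0 0 \<and> H t 1 = \<gamma>0 1) \<and>
     (\<forall>t0\<in>{0..1}. \<forall>s\<in>{0..1}. H t0 s \<in> K \<longrightarrow> (\<forall>t\<in>{0..1}. H t s = H t0 s))"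

end

theory Submission
  imports Defs
begin

lemma adj_bound_real:
  fixes m11 m12 m21 m22 w1 w2 :: real
  shows "\<bar>m11*m22 - m12*m21\<bar> * (\<bar>w1\<bar>+\<bar>w2\<bar>) \<le>
    (\<bar>m11\<bar>+\<bar>m12\<bar>+\<bar>m21\<bar>+\<bar>m22\<bar>) * (\<bar>m11*w1 + m12*w2\<bar> + \<bar>m21*w1 + m22*w2\<bar>)"
proof -
  define v1 where "v1 = m11*w1 + m12*w2"
  define v2 where "v2 = m21*w1 + m22*w2"
  define D where "D = m11*m22 - m12*m21"
  have e1: "D*w1 = m22* v1 - m12* v2" unfolding D_def v1_def v2_def by (simp add: algebra_simps)
  have e2: "D*w2 = m11* v2 - m21* v1" unfolding D_def v1_def v2_def by (simp add: algebra_simps)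
  have "\<bar>D\<bar>*\<bar>w1\<bar> \<le> \<bar>m22\<bar>*\<bar>v1\<bar> + \<bar>m12\<bar>*\<bar>v2\<bar>"
    by (metis abs_mult e1 abs_triangle_ineq4 abs_mult order_trans order_refl)
  moreover have "\<bar>D\<bar>*\<bar>w2\<bar> \<le> \<bar>m11\<bar>*\<bar>v2\<bar> + \<bar>m21\<bar>*\<bar>v1\<bar>"
    by (metis abs_mult e2 abs_triangle_ineq4 abs_mult order_trans order_refl)
  moreover have "0 \<le> \<bar>m11\<bar>*\<bar>v1\<bar>" "0 \<le> \<bar>m12\<bar>*\<bar>v1\<bar>" "0 \<le> \<bar>m21\<bar>*\<bar>v2\<bar>" "0 \<le> \<bar>m22\<bar>*\<bar>v2\<bar>" by simp_all
  ultimately have "\<bar>D\<bar>*(\<bar>w1\<bar>+\<bar>w2\<bar>) \<le> (\<bar>m11\<bar>+\<bar>m12\<bar>+\<bar>m21\<bar>+\<bar>m22\<bar>) * (\<bar>v1\<bar> + \<bar>v2\<bar>)"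
    by (simp only: distrib_left distrib_right)
  then show ?thesis unfolding D_def v1_def v2_def .
qed

lemma norm_R2_le: "norm (w::R2) \<le> \<bar>w$1\<bar> + \<bar>w$2\<bar>"
  using norm_le_l1_cart[of w] by (simp add: sum_2)

lemma R2_l1_le: "\<bar>w$1\<bar> + \<bar>w$2\<bar> \<le> 2 * norm (w::R2)"
  using component_le_norm_cart[of w 1] component_le_norm_cart[of w 2] by linarith

lemma adj_bound_vec:
  fixes w v :: R2 and m11 m12 m21 m22 :: real
  assumes "v$1 = m11*w$1 + m12*w$2" "v$2 = m21*w$1 + m22*w$2"
  shows "\<bar>m11*m22 - m12*m21\<bar> * norm w \<le> 2 * (\<bar>m11\<bar>+\<bar>m12\<bar>+\<bar>m21\<bar>+\<bar>m22\<bar>) * norm v"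
proof -
  have "\<bar>m11*m22 - m12*m21\<bar> * norm w \<le> \<bar>m11*m22 - m12*m21\<bar> * (\<bar>w$1\<bar>+\<bar>w$2\<bar>)"
    by (intro mult_left_mono norm_R2_le) auto
  also have "\<dots> \<le> (\<bar>m11\<bar>+\<bar>m12\<bar>+\<bar>m21\<bar>+\<bar>m22\<bar>) * (\<bar>v$1\<bar> + \<bar>v$2\<bar>)"
    using adj_bound_real[of m11 m22 m12 m21 "w$1" "w$2"] assms by simp
  also have "\<dots> \<le> (\<bar>m11\<bar>+\<bar>m12\<bar>+\<bar>m21\<bar>+\<bar>m22\<bar>) * (2 * norm v)"
    by (intro mult_left_mono R2_l1_le) auto
  finally show ?thesis by (simp add: algebra_simps)
qed

definition ent :: "(R2 \<Rightarrow>\<^sub>L R2) \<Rightarrow> 2 \<Rightarrow> 2 \<Rightarrow> real" where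
  "ent L i j = matrix (blinfun_apply L) $ i $ j"

lemma blin_comp1: "(blinfun_apply L w) $ 1 = ent L 1 1 * w$1 + ent L 1 2 * w$2"
proof -
  have "blinfun_apply L w = matrix (blinfun_apply L) *v w"
    by (simp add: matrix_works bounded_linear.linear blinfun.bounded_linear_right)
  then show ?thesis by (simp add: matrix_vector_mult_def sum_2 ent_def)
qed

lemma blin_comp2: "(blinfun_apply L w) $ 2 = ent L 2 1 * w$1 + ent L 2 2 * w$2"
proof -
  have "blinfun_apply L w = matrix (blinfun_apply L) *v w"
    by (simp add: matrix_works bounded_linear.linear blinfun.bounded_linear_right)
  then show ?thesis by (simp add: matrix_vector_mult_def sum_2 ent_def)
qed

lemma det_ent: "det (matrix (blinfun_apply L)) = ent L 1 1 * ent L 2 2 - ent L 1 2 * ent L 2 1"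
  by (simp add: det_2 ent_def)

lemma ent_bound: "\<bar>ent L i j\<bar> \<le> norm L"
proof -
  have "\<bar>ent L i j\<bar> = \<bar>blinfun_apply L (axis j 1) $ i\<bar>" by (simp add: ent_def matrix_def)
  also have "\<dots> \<le> norm (blinfun_apply L (axis j 1))" by (rule component_le_norm_cart)
  also have "\<dots> \<le> norm L * norm (axis j (1::real))" by (rule norm_blinfun)
  finally show ?thesis by simp
qed

lemma ent_diff: "ent (L - M) i j = ent L i j - ent M i j"
  by (simp add: ent_def matrix_def blinfun.diff_left)

lemma lower_I:
  fixes A :: "R2 \<Rightarrow>\<^sub>L R2"
  assumes "(ent A 1 1 - 1)*(ent A 2 2 - 1) - ent A 1 2 * ent A 2 1 \<noteq> 0"
  shows "\<exists>c>0. \<forall>w. c * norm w \<le> norm (blinfun_apply A w - w)"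
proof -
  define D where "D = (ent A 1 1 - 1)*(ent A 2 2 - 1) - ent A 1 2 * ent A 2 1"
  define S where "S = \<bar>ent A 1 1 - 1\<bar> + \<bar>ent A 1 2\<bar> + \<bar>ent A 2 1\<bar> + \<bar>ent A 2 2 - 1\<bar>"
  have Dp: "\<bar>D\<bar> > 0" using assms D_def by simp
  have Sp: "S \<ge> 0" unfolding S_def by simp
  show ?thesis
  proof (intro exI[of _ "\<bar>D\<bar> / (2*S + 1)"] conjI allI)
    show "\<bar>D\<bar> / (2*S + 1) > 0" using Dp Sp by simp
    fix w :: R2
    have "\<bar>D\<bar> * norm w \<le> 2 * S * norm (blinfun_apply A w - w)"
      unfolding D_def S_def
      by (rule adj_bound_vec) (simp_all add: blin_comp1 blin_comp2 algebra_simps)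
    also have "\<dots> \<le> (2*S+1) * norm (blinfun_apply A w - w)"
      by (intro mult_right_mono) auto
    finally show "\<bar>D\<bar> / (2*S + 1) * norm w \<le> norm (blinfun_apply A w - w)"
      using Sp by (simp add: field_simps)
  qed
qed

lemma absb: "0 \<le> (s::real) \<Longrightarrow> s \<le> 1 \<Longrightarrow> \<bar>s*a\<bar> \<le> \<bar>a\<bar>"
  by (simp add: abs_mult mult_left_le_one_le)

lemma absb2: "0 \<le> (s::real) \<Longrightarrow> s \<le> 1 \<Longrightarrow> \<bar>1-s+s*a\<bar> \<le> 1 + \<bar>a\<bar>"
  using abs_triangle_ineq[of "1-s" "s*a"] absb[of s a] by auto

lemma lower_M:
  fixes A :: "R2 \<Rightarrow>\<^sub>L R2"
  assumes dp: "det (matrix (blinfun_apply A)) > 0"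
    and ev: "(ent A 1 1 - 1)*(ent A 2 2 - 1) - ent A 1 2 * ent A 2 1 = 0"
  shows "\<exists>c>0. \<forall>s\<in>{0..1}. \<forall>w. c * norm w \<le> norm ((1-s) *\<^sub>R w + s *\<^sub>R blinfun_apply A w)"
proof -
  define a11 where "a11 = ent A 1 1"
  define a12 where "a12 = ent A 1 2"
  define a21 where "a21 = ent A 2 1"
  define a22 where "a22 = ent A 2 2"
  define d where "d = a11*a22 - a12*a21"
  have d0: "d > 0" using dp by (simp add: det_ent d_def a11_def a12_def a21_def a22_def)
  have tr: "a11 + a22 = 1 + d" using ev unfolding d_def a11_def a12_def a21_def a22_def
    by (simp add: algebra_simps)
  define S where "S = 2 + \<bar>a11\<bar> + \<bar>a12\<bar> + \<bar>a21\<bar> + \<bar>a22\<bar>"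
  have Sp: "S > 0" unfolding S_def by simp
  show ?thesis
  proof (intro exI[of _ "min 1 d / (2*S)"] conjI ballI allI)
    show "min 1 d / (2*S) > 0" using d0 Sp by simp
    fix s :: real and w :: R2
    assume s: "s \<in> {0..1}"
    define v where "v = (1-s) *\<^sub>R w + s *\<^sub>R blinfun_apply A w"
    have v1: "v$1 = (1-s+s*a11)*w$1 + (s*a12)*w$2"
      by (simp add: v_def blin_comp1 a11_def a12_def algebra_simps)
    have v2: "v$2 = (s*a21)*w$1 + (1-s+s*a22)*w$2"
      by (simp add: v_def blin_comp2 a21_def a22_def algebra_simps)
    have detM: "(1-s+s*a11)*(1-s+s*a22) - (s*a12)*(s*a21) = (1-s) + s*d"
    proof -
      have "(1-s+s*a11)*(1-s+s*a22) - (s*a12)*(s*a21) = (1-s)*(1-s) + s * (1-s) * (a11+a22) + s * s * d"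
        by (simp add: d_def algebra_simps)
      also have "\<dots> = (1-s) + s*d" by (simp add: tr algebra_simps)
      finally show ?thesis .
    qed
    have s01: "0 \<le> s" "s \<le> 1" using s by auto
    have mlow: "min 1 d \<le> (1-s) + s*d"
    proof -
      have "min 1 d = (1-s)*min 1 d + s * min 1 d" by (simp add: algebra_simps)
      also have "\<dots> \<le> (1-s)*1 + s*d" using s01
        by (intro add_mono mult_left_mono) auto
      finally show ?thesis by simp
    qed
    have Sb: "\<bar>1-s+s*a11\<bar> + \<bar>s*a12\<bar> + \<bar>s*a21\<bar> + \<bar>1-s+s*a22\<bar> \<le> S"
    proof -
      have "\<bar>1-s+s*a11\<bar> \<le> 1 + \<bar>a11\<bar>" using s01 by (rule absb2)
      moreover have "\<bar>1-s+s*a22\<bar> \<le> 1 + \<bar>a22\<bar>" using s01 by (rule absb2)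
      moreover have "\<bar>s*a12\<bar> \<le> \<bar>a12\<bar>" using s01 by (rule absb)
      moreover have "\<bar>s*a21\<bar> \<le> \<bar>a21\<bar>" using s01 by (rule absb)
      ultimately show ?thesis unfolding S_def by linarith
    qed
    have "min 1 d * norm w \<le> \<bar>(1-s+s*a11)*(1-s+s*a22) - (s*a12)*(s*a21)\<bar> * norm w"
      using mlow d0 s01 by (intro mult_right_mono) (auto simp: detM)
    also have "\<dots> \<le> 2 * (\<bar>1-s+s*a11\<bar> + \<bar>s*a12\<bar> + \<bar>s*a21\<bar> + \<bar>1-s+s*a22\<bar>) * norm v"
      by (rule adj_bound_vec[OF v1 v2])
    also have "\<dots> \<le> 2 * S * norm v" using Sb by (intro mult_right_mono) auto
    finally have "min 1 d * norm w \<le> 2 * S * norm v" .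
    then show "min 1 d / (2*S) * norm w \<le> norm v"
      using Sp by (simp add: field_simps)
  qed
qed


lemma chart_facts:
  assumes "is_chart U \<phi>"
  shows chart_inj: "inj_on \<phi> U"
    and chart_invf: "\<And>p. p \<in> U \<Longrightarrow> inv_into U \<phi> (\<phi> p) = p"
    and chart_inv_in: "\<And>z. z \<in> \<phi> ` U \<Longrightarrow> inv_into U \<phi> z \<in> U"
    and chart_finv: "\<And>z. z \<in> \<phi> ` U \<Longrightarrow> \<phi> (inv_into U \<phi> z) = z"
    and chart_cont: "continuous_on U \<phi>"
    and chart_cont_inv: "continuous_on (\<phi> ` U) (inv_into U \<phi>)"
    and chart_openU: "open U"
    and chart_openI: "open (\<phi> ` U)"
    and chart_open_map: "\<And>V. open V \<Longrightarrow> V \<subseteq> U \<Longrightarrow> open (\<phi> ` V)"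
proof -
  obtain \<psi> where h: "homeomorphism U (\<phi> ` U) \<phi> \<psi>" and oU: "open U" and oI: "open (\<phi> ` U)"
    using assms unfolding is_chart_def by blast
  have li: "\<And>p. p \<in> U \<Longrightarrow> \<psi> (\<phi> p) = p" using h by (simp add: homeomorphism_def)
  show inj: "inj_on \<phi> U" by (metis li inj_onI)
  show "\<And>p. p \<in> U \<Longrightarrow> inv_into U \<phi> (\<phi> p) = p" using inj by (simp add: inv_into_f_f)
  show "\<And>z. z \<in> \<phi> ` U \<Longrightarrow> inv_into U \<phi> z \<in> U" by (simp add: inv_into_into)
  show "\<And>z. z \<in> \<phi> ` U \<Longrightarrow> \<phi> (inv_into U \<phi> z) = z" by (simp add: f_inv_into_f)
  show "continuous_on U \<phi>" using h by (simp add: homeomorphism_def)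
  have "\<And>z. z \<in> \<phi> ` U \<Longrightarrow> \<psi> z = inv_into U \<phi> z"
    using li inj by (auto simp: inv_into_f_f)
  moreover have "continuous_on (\<phi> ` U) \<psi>" using h by (simp add: homeomorphism_def)
  ultimately show "continuous_on (\<phi> ` U) (inv_into U \<phi>)" using continuous_on_cong by blast
  show "open U" by (rule oU)
  show "open (\<phi> ` U)" by (rule oI)
  fix V assume "open V" "V \<subseteq> U"
  then have "openin (top_of_set U) V" by (simp add: oU open_openin_trans)
  then have "openin (top_of_set (\<phi> ` U)) (\<phi> ` V)" by (rule homeomorphism_imp_open_map[OF h])
  then show "open (\<phi> ` V)" using oI openin_open_trans by blast
qed


lemma C1_onD:
  assumes "C1_on X h" "z \<in> X"
  shows "\<exists>L. (h has_derivative blinfun_apply L) (at z) \<and> frechet_derivative h (at z) = blinfun_apply L"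
  using assms unfolding C1_on_def by (metis frechet_derivative_at)

lemma atlas_chart: "oriented_C1_atlas A \<Longrightarrow> c \<in> A \<Longrightarrow> is_chart (fst c) (snd c)"
  unfolding oriented_C1_atlas_def by blast

lemma atlas_cover: "oriented_C1_atlas A \<Longrightarrow> \<exists>c\<in>A. p \<in> fst c"
  unfolding oriented_C1_atlas_def by blast

lemma atlas_trans:
  assumes "oriented_C1_atlas A" "c \<in> A" "d \<in> A" "z \<in> overlap_dom c d"
  shows "\<exists>L. (transition c d has_derivative blinfun_apply L) (at z) \<and> det (matrix (blinfun_apply L)) > 0"
proof -
  have "C1_on (overlap_dom c d) (transition c d)"
    and dp: "det (matrix (frechet_derivative (transition c d) (at z))) > 0"
    using assms unfolding oriented_C1_atlas_def by blast+
  then obtain L where "(transition c d has_derivative blinfun_apply L) (at z)"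
    "frechet_derivative (transition c d) (at z) = blinfun_apply L"
    using C1_onD assms(4) by blast
  then show ?thesis using dp by auto
qed

lemma C1_diffeo_cont: "C1_diffeo A h \<Longrightarrow> continuous_on UNIV h"
  unfolding C1_diffeo_def C1_map_def by blast

lemma C1_diffeo_inv_cont: "C1_diffeo A h \<Longrightarrow> continuous_on UNIV (inv_into UNIV h)"
  unfolding C1_diffeo_def C1_map_def by blast

lemma open_vimage_UNIV: "continuous_on UNIV h \<Longrightarrow> open B \<Longrightarrow> open (h -` B)"
  using continuous_on_open_vimage[of UNIV h] by auto

lemma rep_C1:
  assumes "C1_diffeo A h" "c \<in> A" "d \<in> A"
  shows "C1_on (snd c ` (fst c \<inter> h -` fst d)) (local_rep c d h)"
  using assms unfolding C1_diffeo_def C1_map_def by blast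

lemma rep_inv_C1:
  assumes "C1_diffeo A h" "c \<in> A" "d \<in> A"
  shows "C1_on (snd c ` (fst c \<inter> inv_into UNIV h -` fst d)) (local_rep c d (inv_into UNIV h))"
  using assms unfolding C1_diffeo_def C1_map_def by blast

lemma rep_val:
  assumes "is_chart (fst c) (snd c)" "p \<in> fst c"
  shows "local_rep c d h (snd c p) = snd d (h p)"
  using chart_invf[OF assms(1) assms(2)] by (simp add: local_rep_def)

lemma rep_open:
  assumes "oriented_C1_atlas A" "C1_diffeo A h" "c \<in> A" "d \<in> A"
  shows "open (snd c ` (fst c \<inter> h -` fst d))"
proof -
  have cc: "is_chart (fst c) (snd c)" "is_chart (fst d) (snd d)" using assms atlas_chart by blast+
  have "open (h -` fst d)" using open_vimage_UNIV[OF C1_diffeo_cont[OF assms(2)]] chart_openU[OF cc(2)] by blast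
  then have "open (fst c \<inter> h -` fst d)" using chart_openU[OF cc(1)] by blast
  then show ?thesis using chart_open_map[OF cc(1)] by blast
qed

lemma deriv_unique_id:
  assumes "(g has_derivative L) (at z)" "open V" "z \<in> V" "\<And>y. y \<in> V \<Longrightarrow> g y = y"
  shows "L = id"
proof -
  have "((\<lambda>y. y) has_derivative L) (at z)"
    by (rule has_derivative_transform_within_open[OF assms(1) assms(2) assms(3)]) (simp add: assms(4))
  moreover have "((\<lambda>y. y) has_derivative id) (at z)" by (simp add: has_derivative_ident id_def)
  ultimately show ?thesis
    by (metis frechet_derivative_at)
qed

lemma det_comp_blin:
  fixes L M :: "R2 \<Rightarrow>\<^sub>L R2"
  shows   "det (matrix (blinfun_apply L \<circ> blinfun_apply M)) = det (matrix (blinfun_apply L)) * det (matrix (blinfun_apply M))"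
proof -
  have "linear (blinfun_apply L)" "linear (blinfun_apply M)"
    by (simp_all add: bounded_linear.linear blinfun.bounded_linear_right)
  from matrix_compose[OF this(2) this(1)] show ?thesis by (simp add: det_mul)
qed

lemma rep_det_nonzero:
  assumes at: "oriented_C1_atlas A" and h: "C1_diffeo A h" and cd: "c \<in> A" "d \<in> A"
    and p: "p \<in> fst c" "h p \<in> fst d"
  shows "det (matrix (frechet_derivative (local_rep c d h) (at (snd c p)))) \<noteq> 0"
proof -
  have cc: "is_chart (fst c) (snd c)" "is_chart (fst d) (snd d)" using at cd atlas_chart by blast+
  have bij: "bij h" using h unfolding C1_diffeo_def by blast
  define hi where "hi = inv_into UNIV h"
  have hih: "\<And>q. hi (h q) = q" unfolding hi_def using bij by (simp add: bij_is_inj)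
  have zin: "snd c p \<in> snd c ` (fst c \<inter> h -` fst d)" using p by blast
  obtain LR where LR: "(local_rep c d h has_derivative blinfun_apply LR) (at (snd c p))"
    "frechet_derivative (local_rep c d h) (at (snd c p)) = blinfun_apply LR"
    using C1_onD[OF rep_C1[OF h cd] zin] by blast
  have Rv: "local_rep c d h (snd c p) = snd d (h p)" by (rule rep_val[OF cc(1) p(1)])
  have win: "snd d (h p) \<in> snd d ` (fst d \<inter> hi -` fst c)" using p hih by auto
  obtain LS where LS: "(local_rep d c hi has_derivative blinfun_apply LS) (at (snd d (h p)))"
    using C1_onD[OF rep_inv_C1[OF h cd(2) cd(1)] win[unfolded hi_def]] unfolding hi_def by blast
  have comp: "(local_rep d c hi \<circ> local_rep c d h has_derivative blinfun_apply LS \<circ> blinfun_apply LR) (at (snd c p))"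
    by (rule diff_chain_at[OF LR(1)]) (simp add: Rv LS)
  have eq: "(local_rep d c hi \<circ> local_rep c d h) y = y" if yin: "y \<in> snd c ` (fst c \<inter> h -` fst d)" for y
  proof -
    obtain q where q: "q \<in> fst c" "h q \<in> fst d" "y = snd c q" using yin by blast
    have "local_rep c d h y = snd d (h q)" using rep_val[OF cc(1) q(1)] q(3) by simp
    moreover have "local_rep d c hi (snd d (h q)) = snd c (hi (h q))" by (rule rep_val[OF cc(2) q(2)])
    ultimately show ?thesis using q(3) hih by simp
  qed
  have "blinfun_apply LS \<circ> blinfun_apply LR = id"
    by (rule deriv_unique_id[OF comp rep_open[OF at h cd] zin eq]) 
  then have "det (matrix (blinfun_apply LS)) * det (matrix (blinfun_apply LR)) = 1"
    using det_comp_blin[of LS LR] by (simp add: matrix_id_mat_1)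
  then show ?thesis using LR(2) by auto
qed


lemma rep_open_gen:
  assumes "oriented_C1_atlas A" "continuous_on UNIV h" "c \<in> A" "open W"
  shows "open (snd c ` (fst c \<inter> h -` W))"
proof -
  have cc: "is_chart (fst c) (snd c)" using assms atlas_chart by blast
  have "open (h -` W)" using open_vimage_UNIV[OF assms(2) assms(4)] .
  then have "open (fst c \<inter> h -` W)" using chart_openU[OF cc] by blast
  then show ?thesis using chart_open_map[OF cc] by blast
qed

lemma trans_val:
  assumes "is_chart (fst d) (snd d)" "q \<in> fst d"
  shows "transition d d' (snd d q) = snd d' q"
  using chart_invf[OF assms] by (simp add: transition_def)

lemma rep_det_sign:
  assumes at: "oriented_C1_atlas A" and h: "C1_diffeo A h" and cd: "c \<in> A" "d \<in> A" "d' \<in> A"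
    and p: "p \<in> fst c" "h p \<in> fst d" "h p \<in> fst d'"
  shows "(det (matrix (frechet_derivative (local_rep c d' h) (at (snd c p)))) > 0) =
         (det (matrix (frechet_derivative (local_rep c d h) (at (snd c p)))) > 0)"
proof -
  have cc: "is_chart (fst c) (snd c)" "is_chart (fst d) (snd d)" "is_chart (fst d') (snd d')"
    using at cd atlas_chart by blast+
  have zin: "snd c p \<in> snd c ` (fst c \<inter> h -` fst d)" using p by blast
  obtain LR where LR: "(local_rep c d h has_derivative blinfun_apply LR) (at (snd c p))"
    "frechet_derivative (local_rep c d h) (at (snd c p)) = blinfun_apply LR"
    using C1_onD[OF rep_C1[OF h cd(1,2)] zin] by blast
  have Rv: "local_rep c d h (snd c p) = snd d (h p)" by (rule rep_val[OF cc(1) p(1)])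
  have win: "snd d (h p) \<in> overlap_dom d d'" using p unfolding overlap_dom_def by blast
  obtain LT where LT: "(transition d d' has_derivative blinfun_apply LT) (at (snd d (h p)))"
    "det (matrix (blinfun_apply LT)) > 0"
    using atlas_trans[OF at cd(2,3) win] by blast
  have comp: "(transition d d' \<circ> local_rep c d h has_derivative blinfun_apply LT \<circ> blinfun_apply LR) (at (snd c p))"
    by (rule diff_chain_at[OF LR(1)]) (simp add: Rv LT)
  define V where "V = snd c ` (fst c \<inter> h -` (fst d \<inter> fst d'))"
  have oV: "open V" unfolding V_def
    by (rule rep_open_gen[OF at C1_diffeo_cont[OF h] cd(1)])
       (use chart_openU[OF cc(2)] chart_openU[OF cc(3)] in blast)
  have zV: "snd c p \<in> V" unfolding V_def using p by blast
  have eq: "(transition d d' \<circ> local_rep c d h) y = local_rep c d' h y" if yin: "y \<in> V" for y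
  proof -
    obtain q where q: "q \<in> fst c" "h q \<in> fst d" "h q \<in> fst d'" "y = snd c q" using yin V_def by blast
    have "local_rep c d h y = snd d (h q)" using rep_val[OF cc(1) q(1)] q(4) by simp
    moreover have "local_rep c d' h y = snd d' (h q)" using rep_val[OF cc(1) q(1)] q(4) by simp
    ultimately show ?thesis using trans_val[OF cc(2) q(2)] by simp
  qed
  have "(local_rep c d' h has_derivative blinfun_apply LT \<circ> blinfun_apply LR) (at (snd c p))"
    by (rule has_derivative_transform_within_open[OF comp oV zV eq])
  then have "frechet_derivative (local_rep c d' h) (at (snd c p)) = blinfun_apply LT \<circ> blinfun_apply LR"
    by (metis frechet_derivative_at)
  then have "det (matrix (frechet_derivative (local_rep c d' h) (at (snd c p)))) =
     det (matrix (blinfun_apply LT)) * det (matrix (frechet_derivative (local_rep c d h) (at (snd c p))))"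
    using LR(2) det_comp_blin by simp
  then show ?thesis using LT(2) by (simp add: zero_less_mult_iff)
qed

lemma prod_close:
  fixes x y x' y' B e :: real
  assumes "\<bar>x\<bar> \<le> B" "\<bar>y\<bar> \<le> B" "\<bar>x' - x\<bar> \<le> e" "\<bar>y' - y\<bar> \<le> e"
  shows "\<bar>x'*y' - x*y\<bar> \<le> e*(2*B + e)"
proof -
  have "x'*y' - x*y = (x'-x)*y' + x*(y'-y)" by (simp add: algebra_simps)
  moreover have "\<bar>y'\<bar> \<le> B + e" using assms by linarith
  moreover have "\<bar>(x'-x)*y'\<bar> \<le> e*(B+e)"
    unfolding abs_mult using assms(3) \<open>\<bar>y'\<bar> \<le> B + e\<close> by (intro mult_mono) auto
  moreover have "\<bar>x*(y'-y)\<bar> \<le> B*e"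
    unfolding abs_mult using assms by (intro mult_mono) auto
  ultimately show ?thesis by (smt (verit, best) abs_triangle_ineq distrib_left mult.commute)
qed

lemma det_close:
  fixes L M :: "R2 \<Rightarrow>\<^sub>L R2"
  assumes "norm (L - M) \<le> e"
  shows "\<bar>det (matrix (blinfun_apply L)) - det (matrix (blinfun_apply M))\<bar> \<le> 2*e*(2*norm M + e)"
proof -
  have b: "\<And>i j. \<bar>ent M i j\<bar> \<le> norm M" by (rule ent_bound)
  have d: "\<And>i j. \<bar>ent L i j - ent M i j\<bar> \<le> e"
    using ent_bound[of "L - M"] assms by (metis ent_diff order_trans)
  have 1: "\<bar>ent L 1 1 * ent L 2 2 - ent M 1 1 * ent M 2 2\<bar> \<le> e*(2*norm M + e)"
    by (rule prod_close[OF b b d d])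
  have 2: "\<bar>ent L 1 2 * ent L 2 1 - ent M 1 2 * ent M 2 1\<bar> \<le> e*(2*norm M + e)"
    by (rule prod_close[OF b b d d])
  show ?thesis unfolding det_ent using 1 2 by linarith
qed


lemma onorm_diff_blin:
  fixes L M :: "R2 \<Rightarrow>\<^sub>L R2"
  shows "onorm (\<lambda>v. blinfun_apply L v - blinfun_apply M v) = norm (L - M)"
proof -
  have "(\<lambda>v. blinfun_apply L v - blinfun_apply M v) = blinfun_apply (L - M)"
    by (simp add: fun_eq_iff blinfun.diff_left)
  then show ?thesis by (simp add: norm_blinfun.rep_eq)
qed

lemma orient:
  assumes at: "oriented_C1_atlas A" and f: "f \<in> Diff0 A" and fx: "f x = x"
    and c: "c \<in> A" and xc: "x \<in> fst c"
  shows "det (matrix (frechet_derivative (local_rep c c f) (at (snd c x)))) > 0"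
proof -
  obtain H :: "real \<Rightarrow> 'a \<Rightarrow> 'a" where H0: "H 0 = id" and H1: "H 1 = f" and Hd: "\<forall>t\<in>{0..1}. C1_diffeo A (H t)"
    and Hc: "\<forall>t\<in>{0..1}. \<forall>F \<epsilon>. C1_nbhd_data A (H t) F \<epsilon> \<longrightarrow>
            (\<exists>\<delta>>0. \<forall>s\<in>{0..1}. \<bar>s - t\<bar> < \<delta> \<longrightarrow> H s \<in> C1_basic_nbhd A (H t) F \<epsilon>)"
    using f[unfolded Diff0_def mem_Collect_eq] by (elim conjE exE) blast
  have fd: "C1_diffeo A f" using f unfolding Diff0_def by blast
  define dd where "dd t = (SOME d. d \<in> A \<and> H t x \<in> fst d)" for t
  have dd: "dd t \<in> A \<and> H t x \<in> fst (dd t)" for t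
    unfolding dd_def by (rule someI_ex) (use atlas_cover[OF at] in blast)
  define z0 where "z0 = snd c x"
  define P where "P t = (det (matrix (frechet_derivative (local_rep c (dd t) (H t)) (at z0))) > 0)" for t
  have cc: "is_chart (fst c) (snd c)" using at c atlas_chart by blast
  have loc: "\<forall>t\<in>{0..1}. \<forall>\<^sub>F s in at t within {0..1}. P t = P s"
  proof
    fix t :: real assume t: "t \<in> {0..1}"
    define d where "d = dd t"
    have dA: "d \<in> A" and hxd: "H t x \<in> fst d" using dd d_def by auto
    have Ht: "C1_diffeo A (H t)" using Hd t by blast
    have zin: "z0 \<in> snd c ` (fst c \<inter> H t -` fst d)" using xc hxd z0_def by blast
    obtain Lt where Lt: "frechet_derivative (local_rep c d (H t)) (at z0) = blinfun_apply Lt"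
      using C1_onD[OF rep_C1[OF Ht c dA] zin] by blast
    have dn: "det (matrix (blinfun_apply Lt)) \<noteq> 0"
      using rep_det_nonzero[OF at Ht c dA xc hxd] Lt z0_def by simp
    define \<delta>0 where "\<delta>0 = \<bar>det (matrix (blinfun_apply Lt))\<bar>"
    define B where "B = norm Lt"
    define \<epsilon> where "\<epsilon> = min 1 (\<delta>0 / (4*(2*B+1)))"
    have d0: "\<delta>0 > 0" using dn \<delta>0_def by simp
    have B0: "B \<ge> 0" using B_def by simp
    have ep: "\<epsilon> > 0" using d0 B0 \<epsilon>_def by simp
    have ep1: "\<epsilon> \<le> 1" using \<epsilon>_def by simp
    have small: "2*\<epsilon>*(2*B+\<epsilon>) < \<delta>0"
    proof -
      have "2*\<epsilon>*(2*B+\<epsilon>) \<le> 2*\<epsilon>*(2*B+1)" using ep ep1 by (intro mult_left_mono) auto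
      also have "\<dots> \<le> 2*(\<delta>0 / (4*(2*B+1)))*(2*B+1)"
        using B0 \<epsilon>_def by (intro mult_right_mono mult_left_mono) auto
      also have "\<dots> = \<delta>0/2" using B0 by (simp add: field_simps)
      finally show ?thesis using d0 by simp
    qed
    have nd: "C1_nbhd_data A (H t) {(c, d, {x})} \<epsilon>"
      unfolding C1_nbhd_data_def using ep c dA xc hxd by auto
    obtain \<delta> where \<delta>: "\<delta> > 0" "\<forall>s\<in>{0..1}. \<bar>s - t\<bar> < \<delta> \<longrightarrow> H s \<in> C1_basic_nbhd A (H t) {(c, d, {x})} \<epsilon>"
      using Hc t nd by blast
    show "\<forall>\<^sub>F s in at t within {0..1}. P t = P s"
      unfolding eventually_at
    proof (intro exI[of _ \<delta>] conjI ballI impI)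
      show "\<delta> > 0" by (rule \<delta>(1))
      fix s :: real assume s: "s \<in> {0..1}" and sd: "s \<noteq> t \<and> dist s t < \<delta>"
      have "H s \<in> C1_basic_nbhd A (H t) {(c, d, {x})} \<epsilon>" using \<delta>(2) s sd by (simp add: dist_real_def)
      then have Hs: "C1_diffeo A (H s)" and hsx: "H s x \<in> fst d"
        and on: "onorm (\<lambda>v. frechet_derivative (local_rep c d (H s)) (at z0) v
                     - frechet_derivative (local_rep c d (H t)) (at z0) v) < \<epsilon>"
        unfolding C1_basic_nbhd_def z0_def by auto
      have zin': "z0 \<in> snd c ` (fst c \<inter> H s -` fst d)" using xc hsx z0_def by blast
      obtain Ls where Ls: "frechet_derivative (local_rep c d (H s)) (at z0) = blinfun_apply Ls"
        using C1_onD[OF rep_C1[OF Hs c dA] zin'] by blast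
      have "norm (Ls - Lt) < \<epsilon>" using on Ls Lt onorm_diff_blin by simp
      then have "\<bar>det (matrix (blinfun_apply Ls)) - det (matrix (blinfun_apply Lt))\<bar> \<le> 2*\<epsilon>*(2*norm Lt + \<epsilon>)"
        by (intro det_close) simp
      then have close: "\<bar>det (matrix (blinfun_apply Ls)) - det (matrix (blinfun_apply Lt))\<bar> < \<delta>0"
        using small B_def by simp
      have same: "(det (matrix (blinfun_apply Ls)) > 0) = (det (matrix (blinfun_apply Lt)) > 0)"
        using close \<delta>0_def by (cases "det (matrix (blinfun_apply Lt)) > 0") auto
      have "P s = (det (matrix (frechet_derivative (local_rep c d (H s)) (at z0))) > 0)"
        unfolding P_def z0_def using rep_det_sign[OF at Hs c dA _ xc hsx, of "dd s"] dd[of s] by simp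
      also have "\<dots> = P t" unfolding P_def d_def[symmetric] using Ls Lt same by simp
      finally show "P t = P s" by simp
    qed
  qed
  have "P 0 = P 1"
    by (rule connected_local_const[of "{0..1}" 0 1 P]) (use loc in auto)
  moreover have "P 0"
  proof -
    have d0: "dd 0 \<in> A" "x \<in> fst (dd 0)" using dd[of 0] H0 by auto
    have "local_rep c (dd 0) (H 0) = transition c (dd 0)"
      unfolding H0 local_rep_def transition_def by simp
    moreover have "z0 \<in> overlap_dom c (dd 0)" unfolding overlap_dom_def z0_def using xc d0 by blast
    ultimately show ?thesis unfolding P_def using atlas_trans[OF at c d0(1)]
      by (metis frechet_derivative_at)
  qed
  moreover have "P 1 = (det (matrix (frechet_derivative (local_rep c c f) (at (snd c x)))) > 0)"
    unfolding P_def z0_def H1 using rep_det_sign[OF at fd c dd[of 1, THEN conjunct1] c xc] dd[of 1] H1 fx xc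
    by simp
  ultimately show ?thesis by simp
qed


lemma prod3_close:
  fixes X1 Y1 X2 Y2 X3 Y3 :: "R2 \<Rightarrow>\<^sub>L R2"
  assumes d1: "norm (X1 - Y1) \<le> e" and d2: "norm (X2 - Y2) \<le> e" and d3: "norm (X3 - Y3) \<le> e"
    and b1: "norm Y1 \<le> B" and b2: "norm Y2 \<le> B" and b3: "norm Y3 \<le> B" and e1: "e \<le> 1"
  shows "norm ((X1 o\<^sub>L (X2 o\<^sub>L X3)) - (Y1 o\<^sub>L (Y2 o\<^sub>L Y3))) \<le> 3*(B+1)^2*e"
proof -
  have e0: "0 \<le> e" using d1 norm_ge_zero order_trans by blast
  have B0: "0 \<le> B" using b1 norm_ge_zero order_trans by blast
  have nX2: "norm X2 \<le> B + 1" using d2 b2 e1 norm_triangle_ineq2[of X2 Y2] by linarith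
  have nX3: "norm X3 \<le> B + 1" using d3 b3 e1 norm_triangle_ineq2[of X3 Y3] by linarith
  have eq: "(X1 o\<^sub>L (X2 o\<^sub>L X3)) - (Y1 o\<^sub>L (Y2 o\<^sub>L Y3)) =
      ((X1 - Y1) o\<^sub>L (X2 o\<^sub>L X3)) + (Y1 o\<^sub>L ((X2 - Y2) o\<^sub>L X3)) + (Y1 o\<^sub>L (Y2 o\<^sub>L (X3 - Y3)))"
    by (rule blinfun_eqI) (simp add: blinfun.diff_left blinfun.diff_right blinfun.add_left)
  have n1: "norm ((X1 - Y1) o\<^sub>L (X2 o\<^sub>L X3)) \<le> e * ((B+1)*(B+1))"
  proof -
    have "norm ((X1 - Y1) o\<^sub>L (X2 o\<^sub>L X3)) \<le> norm (X1 - Y1) * (norm X2 * norm X3)"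
      by (rule order_trans[OF norm_blinfun_compose[of "X1 - Y1" "X2 o\<^sub>L X3"] mult_left_mono[OF norm_blinfun_compose[of "X2" "X3"] norm_ge_zero]])
    also have "\<dots> \<le> e * ((B+1)*(B+1))"
      using d1 nX2 nX3 e0 B0 by (intro mult_mono) auto
    finally show ?thesis .
  qed
  have n2: "norm (Y1 o\<^sub>L ((X2 - Y2) o\<^sub>L X3)) \<le> B * (e * (B+1))"
  proof -
    have "norm (Y1 o\<^sub>L ((X2 - Y2) o\<^sub>L X3)) \<le> norm Y1 * (norm (X2 - Y2) * norm X3)"
      by (rule order_trans[OF norm_blinfun_compose[of "Y1" "(X2 - Y2) o\<^sub>L X3"] mult_left_mono[OF norm_blinfun_compose[of "(X2 - Y2)" "X3"] norm_ge_zero]])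
    also have "\<dots> \<le> B * (e * (B+1))"
      using b1 d2 nX3 e0 B0 by (intro mult_mono) auto
    finally show ?thesis .
  qed
  have n3: "norm (Y1 o\<^sub>L (Y2 o\<^sub>L (X3 - Y3))) \<le> B * (B * e)"
  proof -
    have "norm (Y1 o\<^sub>L (Y2 o\<^sub>L (X3 - Y3))) \<le> norm Y1 * (norm Y2 * norm (X3 - Y3))"
      by (rule order_trans[OF norm_blinfun_compose[of "Y1" "Y2 o\<^sub>L (X3 - Y3)"] mult_left_mono[OF norm_blinfun_compose[of "Y2" "(X3 - Y3)"] norm_ge_zero]])
    also have "\<dots> \<le> B * (B * e)"
      using b1 b2 d3 e0 B0 by (intro mult_mono) auto
    finally show ?thesis .
  qed
  have "norm ((X1 o\<^sub>L (X2 o\<^sub>L X3)) - (Y1 o\<^sub>L (Y2 o\<^sub>L Y3))) \<le> e * ((B+1)*(B+1)) + B * (e * (B+1)) + B * (B * e)"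
    unfolding eq by (rule order_trans[OF norm_triangle_le[OF add_right_mono[OF norm_triangle_ineq]]]) (use n1 n2 n3 in linarith)
  also have "\<dots> \<le> 3*(B+1)^2*e"
  proof -
    have "B * (e * (B+1)) \<le> e * ((B+1)*(B+1))" using e0 B0 by (simp add: algebra_simps mult_right_mono)
    moreover have "B * (B * e) \<le> e * ((B+1)*(B+1))" using e0 B0 by (simp add: algebra_simps mult_right_mono)
    ultimately show ?thesis by (simp add: power2_eq_square algebra_simps)
  qed
  finally show ?thesis .
qed


lemma cont_ball:
  fixes g :: "'b::metric_space \<Rightarrow> 'c::metric_space"
  assumes "open V" "a \<in> V" "continuous_on V g" "e > 0"
  shows "\<exists>r>0. \<forall>y. dist y a < r \<longrightarrow> y \<in> V \<and> dist (g y) (g a) < e"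
proof -
  obtain r1 where r1: "r1 > 0" "ball a r1 \<subseteq> V" using assms(1,2) open_contains_ball by blast
  obtain r2 where r2: "r2 > 0" "\<forall>y\<in>V. dist y a < r2 \<longrightarrow> dist (g y) (g a) < e"
    using assms(2,3,4) unfolding continuous_on_iff by blast
  show ?thesis
  proof (intro exI[of _ "min r1 r2"] conjI allI impI)
    show "min r1 r2 > 0" using r1 r2 by simp
    fix y assume "dist y a < min r1 r2"
    then show yV: "y \<in> V" using r1 by (auto simp: dist_commute subset_iff)
    then show "dist (g y) (g a) < e" using r2 \<open>dist y a < min r1 r2\<close> by auto
  qed
qed

lemma deriv_cont_on:
  assumes "\<forall>z\<in>V. (h has_derivative blinfun_apply (D z)) (at z)"
  shows "continuous_on V h"
  using assms by (intro continuous_at_imp_continuous_on) (metis has_derivative_continuous)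

lemma LCL:
  fixes A :: "'a::topological_space chartT set" and \<phi> :: "'a \<Rightarrow> R2"
  assumes at: "oriented_C1_atlas A" and chart: "compatible_chart A (U, \<phi>)" and cA: "c \<in> A"
    and xU: "x \<in> U" and xc: "x \<in> fst c" and fd: "C1_diffeo A f" and fx: "f x = x"
    and D1: "\<forall>z\<in>overlap_dom (U,\<phi>) c. (transition (U,\<phi>) c has_derivative blinfun_apply (D1 z)) (at z)"
       "continuous_on (overlap_dom (U,\<phi>) c) D1"
    and D2: "\<forall>z\<in>overlap_dom c (U,\<phi>). (transition c (U,\<phi>) has_derivative blinfun_apply (D2 z)) (at z)"
       "continuous_on (overlap_dom c (U,\<phi>)) D2"
    and Df: "\<forall>z\<in>snd c ` (fst c \<inter> f -` fst c). (local_rep c c f has_derivative blinfun_apply (Df z)) (at z)"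
       "continuous_on (snd c ` (fst c \<inter> f -` fst c)) Df"
    and kp: "\<kappa> > 0"
  shows "\<exists>\<epsilon>1>0. \<exists>K \<eta>. C1_nbhd_data A f {(c,c,K)} \<eta> \<and>
     (\<forall>g\<in>C1_basic_nbhd A f {(c,c,K)} \<eta>. \<forall>z\<in>ball (\<phi> x) \<epsilon>1.
        z \<in> \<phi> ` U \<and> g (inv_into U \<phi> z) \<in> U \<and>
        (\<exists>L. (local_rep (U,\<phi>) (U,\<phi>) g has_derivative blinfun_apply L) (at z) \<and>
             norm (L - (D2 (snd c x) o\<^sub>L (Df (snd c x) o\<^sub>L D1 (\<phi> x)))) \<le> \<kappa>))"
proof -
  define Uc where "Uc = fst c"
  define pc where "pc = snd c"
  have c_eq: "c = (Uc, pc)" unfolding Uc_def pc_def by simp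
  define a where "a = \<phi> x"
  define a' where "a' = pc x"
  define ic where "ic = inv_into Uc pc"
  define i\<phi> where "i\<phi> = inv_into U \<phi>"
  define T1 where "T1 = transition (U,\<phi>) c"
  define T2 where "T2 = transition c (U,\<phi>)"
  define Fc where "Fc = local_rep c c f"
  define O1 where "O1 = overlap_dom (U,\<phi>) c"
  define O2 where "O2 = overlap_dom c (U,\<phi>)"
  define Of where "Of = pc ` (Uc \<inter> f -` Uc)"
  have cphi: "is_chart U \<phi>" using chart unfolding compatible_chart_def by simp
  have cc: "is_chart Uc pc" using atlas_chart[OF at cA] unfolding Uc_def pc_def .
  have O1e: "O1 = \<phi> ` (U \<inter> Uc)" unfolding O1_def overlap_dom_def Uc_def by simp
  have O2e: "O2 = pc ` (Uc \<inter> U)" unfolding O2_def overlap_dom_def Uc_def pc_def by simp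
  have oO1: "open O1" unfolding O1e
    by (rule chart_open_map[OF cphi]) (use chart_openU[OF cphi] chart_openU[OF cc] in auto)
  have oO2: "open O2" unfolding O2e
    by (rule chart_open_map[OF cc]) (use chart_openU[OF cphi] chart_openU[OF cc] in auto)
  have oOf: "open Of" unfolding Of_def Uc_def pc_def by (rule rep_open[OF at fd cA cA])
  have aO1: "a \<in> O1" unfolding O1e a_def using xU xc Uc_def by blast
  have aO2: "a' \<in> O2" unfolding O2e a'_def using xU xc Uc_def by blast
  have aOf: "a' \<in> Of" unfolding Of_def a'_def using xc fx Uc_def by auto
  have T1v: "T1 (\<phi> p) = pc p" if "p \<in> U" for p
    unfolding T1_def pc_def using trans_val[of "(U,\<phi>)" p c] cphi that by simp
  have T2v: "T2 (pc p) = \<phi> p" if "p \<in> Uc" for p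
    unfolding T2_def using trans_val[of c p "(U,\<phi>)"] cc that Uc_def pc_def by simp
  have Fcv: "Fc (pc p) = pc (f p)" if "p \<in> Uc" for p
    unfolding Fc_def using rep_val[of c p c f] cc that Uc_def pc_def by simp
  have T1a: "T1 a = a'" using T1v[OF xU] a_def a'_def by simp
  have Fca: "Fc a' = a'" using Fcv[OF xc[folded Uc_def]] fx a'_def by simp
  have D1': "\<forall>z\<in>O1. (T1 has_derivative blinfun_apply (D1 z)) (at z)" using D1(1) O1_def T1_def by simp
  have D2': "\<forall>z\<in>O2. (T2 has_derivative blinfun_apply (D2 z)) (at z)" using D2(1) O2_def T2_def by simp
  have Df': "\<forall>z\<in>Of. (Fc has_derivative blinfun_apply (Df z)) (at z)" using Df(1) Of_def Fc_def Uc_def pc_def by simp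
  define B where "B = norm (D2 a') + norm (Df a') + norm (D1 a)"
  have B0: "B \<ge> 0" unfolding B_def by simp
  define e where "e = min 1 (\<kappa> / (3*(B+1)^2))"
  have e0: "e > 0" unfolding e_def using kp B0 by simp
  have e1: "e \<le> 1" unfolding e_def by simp
  have eK: "3*(B+1)^2*e \<le> \<kappa>"
  proof -
    have "3*(B+1)^2*e \<le> 3*(B+1)^2*(\<kappa> / (3*(B+1)^2))"
      unfolding e_def by (intro mult_left_mono) (auto)
    also have "\<dots> = \<kappa>" using B0 by (simp add: field_simps)
    finally show ?thesis .
  qed
  obtain r2 where r2: "r2 > 0" "\<forall>u. dist u a' < r2 \<longrightarrow> u \<in> O2 \<and> dist (D2 u) (D2 a') < e"
    using cont_ball[OF oO2 aO2 D2(2)[folded O2_def] e0] by blast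
  obtain rf where rf: "rf > 0" "\<forall>w. dist w a' < rf \<longrightarrow> w \<in> Of \<and> dist (Df w) (Df a') < e/2"
    using cont_ball[OF oOf aOf _ half_gt_zero[OF e0], of Df] Df(2) unfolding Of_def Uc_def pc_def by blast
  obtain \<rho> where \<rho>: "\<rho> > 0" "\<forall>w. dist w a' < \<rho> \<longrightarrow> w \<in> Of \<and> dist (Fc w) (Fc a') < r2/2"
    using cont_ball[OF oOf aOf deriv_cont_on[OF Df'] half_gt_zero[OF r2(1)]] by blast
  define r where "r = min rf \<rho>"
  have r0: "r > 0" unfolding r_def using rf \<rho> by simp
  obtain r1 where r1: "r1 > 0" "\<forall>z. dist z a < r1 \<longrightarrow> z \<in> O1 \<and> dist (D1 z) (D1 a) < e"
    using cont_ball[OF oO1 aO1 D1(2)[folded O1_def] e0] by blast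
  obtain r1' where r1': "r1' > 0" "\<forall>z. dist z a < r1' \<longrightarrow> z \<in> O1 \<and> dist (T1 z) (T1 a) < r/2"
    using cont_ball[OF oO1 aO1 deriv_cont_on[OF D1'] half_gt_zero[OF r0]] by blast
  define \<epsilon>1 where "\<epsilon>1 = min r1 r1'"
  have ep1: "\<epsilon>1 > 0" unfolding \<epsilon>1_def using r1 r1' by simp
  define K where "K = ic ` cball a' (r/2)"
  define \<eta> where "\<eta> = min (e/2) (r2/2)"
  have eta0: "\<eta> > 0" unfolding \<eta>_def using e0 r2 by simp
  have cbOf: "cball a' (r/2) \<subseteq> Of"
  proof
    fix w assume "w \<in> cball a' (r/2)"
    then have "dist w a' < rf" using r0 unfolding r_def by (auto simp: dist_commute)
    then show "w \<in> Of" using rf by blast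
  qed
  have OfU: "Of \<subseteq> pc ` Uc" unfolding Of_def by blast
  have Kc: "K \<subseteq> Uc" unfolding K_def ic_def using cbOf OfU chart_inv_in[OF cc] by blast
  have Kcomp: "compact K" unfolding K_def ic_def
    by (rule compact_continuous_image[OF continuous_on_subset[OF chart_cont_inv[OF cc]]])
       (use cbOf OfU in auto)
  have fK: "f ` K \<subseteq> Uc"
  proof
    fix y assume "y \<in> f ` K"
    then obtain w where w: "w \<in> cball a' (r/2)" "y = f (ic w)" unfolding K_def by blast
    then have "w \<in> Of" using cbOf by blast
    then obtain q where q: "q \<in> Uc" "f q \<in> Uc" "w = pc q" unfolding Of_def by blast
    then have "ic w = q" unfolding ic_def using chart_invf[OF cc] by simp
    then show "y \<in> Uc" using w q by simp
  qed
  have pcK: "pc ` K = cball a' (r/2)"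
    unfolding K_def ic_def using cbOf OfU chart_finv[OF cc] by (force simp: image_iff)
  have nd: "C1_nbhd_data A f {(c,c,K)} \<eta>"
    unfolding C1_nbhd_data_def using eta0 cA Kcomp Kc fK Uc_def by auto
  show ?thesis
  proof (rule exI[of _ \<epsilon>1], rule conjI[OF ep1], rule exI[of _ K], rule exI[of _ \<eta>], rule conjI[OF nd], intro ballI conjI)
    fix g z assume g: "g \<in> C1_basic_nbhd A f {(c,c,K)} \<eta>" and z: "z \<in> ball (\<phi> x) \<epsilon>1"
    define Gc where "Gc = local_rep c c g"
    have gd: "C1_diffeo A g" and gK: "g ` K \<subseteq> Uc"
      and gclose: "\<forall>w\<in>pc ` K. norm (Gc w - Fc w) < \<eta> \<and>
           onorm (\<lambda>v. frechet_derivative Gc (at w) v - frechet_derivative Fc (at w) v) < \<eta>"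
      using g unfolding C1_basic_nbhd_def Gc_def Fc_def Uc_def pc_def by auto
    have Gcv: "Gc (pc p) = pc (g p)" if "p \<in> Uc" for p
      unfolding Gc_def using rep_val[of c p c g] cc that Uc_def pc_def by simp
    have props: "z' \<in> O1 \<and> i\<phi> z' \<in> U \<and> i\<phi> z' \<in> Uc \<and> \<phi> (i\<phi> z') = z' \<and> T1 z' = pc (i\<phi> z') \<and>
        dist (pc (i\<phi> z')) a' < r/2 \<and> g (i\<phi> z') \<in> Uc \<and> g (i\<phi> z') \<in> U \<and>
        dist (pc (g (i\<phi> z'))) a' < r2 \<and>
        T2 (Gc (T1 z')) = local_rep (U,\<phi>) (U,\<phi>) g z'" if z': "z' \<in> ball a \<epsilon>1" for z'
    proof -
      have dz: "dist z' a < r1" "dist z' a < r1'" using z' unfolding \<epsilon>1_def by (auto simp: dist_commute)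
      have zO1: "z' \<in> O1" using r1 dz by blast
      then obtain p where p: "p \<in> U" "p \<in> Uc" "z' = \<phi> p" unfolding O1e by blast
      have ip: "i\<phi> z' = p" unfolding i\<phi>_def using chart_invf[OF cphi p(1)] p(3) by simp
      have T1z: "T1 z' = pc p" using T1v[OF p(1)] p(3) by simp
      have dT: "dist (pc p) a' < r/2" using r1' dz T1z T1a by auto
      have pK: "p \<in> K"
      proof -
        have "pc p \<in> cball a' (r/2)" using dT by (simp add: dist_commute less_imp_le)
        moreover have "ic (pc p) = p" unfolding ic_def using chart_invf[OF cc p(2)] .
        ultimately show ?thesis unfolding K_def by (metis image_eqI)
      qed
      have gpc: "g p \<in> Uc" using gK pK by blast
      have wc: "pc p \<in> pc ` K" using pK by blast
      have Gw: "norm (Gc (pc p) - Fc (pc p)) < \<eta>" using gclose wc by blast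
      have dF: "dist (Fc (pc p)) a' < r2/2"
      proof -
        have "dist (pc p) a' < \<rho>" using dT r0 unfolding r_def by linarith
        then show ?thesis using \<rho>(2) Fca by auto
      qed
      have du: "dist (pc (g p)) a' < r2"
      proof -
        have "dist (pc (g p)) (Fc (pc p)) < r2/2"
          using Gw Gcv[OF p(2)] unfolding \<eta>_def by (simp add: dist_norm)
        then show ?thesis using dF dist_triangle[of "pc (g p)" a' "Fc (pc p)"] by linarith
      qed
      have uO2: "pc (g p) \<in> O2" using r2(2) du by blast
      then obtain q where q: "q \<in> Uc" "q \<in> U" "pc (g p) = pc q" unfolding O2e by blast
      have gpU: "g p \<in> U" using chart_inj[OF cc] gpc q by (metis inj_onD)
      have "T2 (Gc (T1 z')) = \<phi> (g p)" using T1z Gcv[OF p(2)] T2v[OF gpc] by simp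
      moreover have "local_rep (U,\<phi>) (U,\<phi>) g z' = \<phi> (g p)"
        unfolding local_rep_def using ip i\<phi>_def by simp
      ultimately show ?thesis using zO1 p ip T1z dT gpc gpU du by simp
    qed
    have za: "z \<in> ball a \<epsilon>1" using z a_def by simp
    note pz = props[OF za]
    define p where "p = i\<phi> z"
    define w where "w = pc p"
    define u where "u = pc (g p)"
    have T1z: "T1 z = w" using pz unfolding w_def p_def by simp
    have Gw: "Gc w = u" unfolding w_def u_def using Gcv pz p_def by simp
    have dza: "dist z a < r1" using za unfolding \<epsilon>1_def by (auto simp: dist_commute)
    have wOf: "w \<in> Of"
    proof -
      have "dist w a' < rf" using pz r0 unfolding w_def p_def r_def by linarith
      then show ?thesis using rf by blast
    qed
    have wK: "w \<in> pc ` K"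
      unfolding pcK w_def p_def using pz by (simp add: dist_commute less_imp_le)
    have wG: "w \<in> pc ` (Uc \<inter> g -` Uc)" unfolding w_def p_def using pz by blast
    obtain LG where LG: "(Gc has_derivative blinfun_apply LG) (at w)" "frechet_derivative Gc (at w) = blinfun_apply LG"
      using C1_onD[OF rep_C1[OF gd cA cA] wG[unfolded Uc_def pc_def]] Gc_def by blast
    have fFc: "frechet_derivative Fc (at w) = blinfun_apply (Df w)"
      using Df' wOf by (metis frechet_derivative_at)
    have nG: "norm (LG - Df w) < e/2"
    proof -
      have "norm (LG - Df w) < \<eta>" using gclose wK LG(2) fFc onorm_diff_blin by auto
      then show ?thesis unfolding \<eta>_def by simp
    qed
    have nf: "norm (Df w - Df a') < e/2"
    proof -
      have "dist w a' < rf" using pz r0 unfolding w_def p_def r_def by linarith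
      then show ?thesis using rf by (simp add: dist_norm)
    qed
    have nG': "norm (LG - Df a') \<le> e"
      using norm_triangle_ineq[of "LG - Df w" "Df w - Df a'"] nG nf by simp
    have n1: "norm (D1 z - D1 a) \<le> e" using r1(2) dza by (simp add: dist_norm less_imp_le)
    have uO2: "u \<in> O2" and n2: "norm (D2 u - D2 a') \<le> e"
      using r2(2) pz unfolding u_def p_def by (auto simp: dist_norm less_imp_le)
    have zO1: "z \<in> O1" using pz by simp
    have chain: "(T2 \<circ> (Gc \<circ> T1) has_derivative blinfun_apply (D2 u o\<^sub>L (LG o\<^sub>L D1 z))) (at z)"
    proof -
      have "(Gc \<circ> T1 has_derivative blinfun_apply LG \<circ> blinfun_apply (D1 z)) (at z)"
        by (rule diff_chain_at) (use D1' zO1 LG T1z in auto)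
      then have "(T2 \<circ> (Gc \<circ> T1) has_derivative blinfun_apply (D2 u) \<circ> (blinfun_apply LG \<circ> blinfun_apply (D1 z))) (at z)"
        by (rule diff_chain_at) (use D2' uO2 T1z Gw in auto)
      then show ?thesis by (simp add: blinfun_compose.rep_eq comp_assoc)
    qed
    have deriv: "(local_rep (U,\<phi>) (U,\<phi>) g has_derivative blinfun_apply (D2 u o\<^sub>L (LG o\<^sub>L D1 z))) (at z)"
      by (rule has_derivative_transform_within_open[OF chain open_ball za]) (metis comp_apply props)
    have bound: "norm ((D2 u o\<^sub>L (LG o\<^sub>L D1 z)) - (D2 a' o\<^sub>L (Df a' o\<^sub>L D1 a))) \<le> \<kappa>"
      by (rule order_trans[OF prod3_close[OF n2 nG' n1 _ _ _ e1, of B] eK]) (auto simp: B_def)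
    show "z \<in> \<phi> ` U" using pz by (metis imageI)
    show "g (inv_into U \<phi> z) \<in> U" using pz unfolding i\<phi>_def by simp
    show "\<exists>L. (local_rep (U,\<phi>) (U,\<phi>) g has_derivative blinfun_apply L) (at z) \<and>
             norm (L - (D2 (snd c x) o\<^sub>L (Df (snd c x) o\<^sub>L D1 (\<phi> x)))) \<le> \<kappa>"
      using deriv bound unfolding a_def a'_def pc_def by blast
  qed
qed


lemma lin_bound:
  fixes F :: "R2 \<Rightarrow> R2" and DF :: "R2 \<Rightarrow> R2 \<Rightarrow>\<^sub>L R2"
  assumes deriv: "\<forall>z\<in>ball a r. (F has_derivative blinfun_apply (DF z)) (at z)"
    and bnd: "\<forall>z\<in>ball a r. norm (DF z - A0) \<le> \<delta>"
    and x: "x \<in> ball a r" and y: "y \<in> ball a r"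
  shows "norm ((F x - blinfun_apply A0 x) - (F y - blinfun_apply A0 y)) \<le> \<delta> * norm (x - y)"
proof -
  have "norm ((\<lambda>z. F z - blinfun_apply A0 z) x - (\<lambda>z. F z - blinfun_apply A0 z) y) \<le> \<delta> * norm (x - y)"
  proof (rule differentiable_bound[OF convex_ball _ _ x y])
    fix z assume z: "z \<in> ball a r"
    have "(F has_derivative blinfun_apply (DF z)) (at z)" using deriv z by blast
    then have "((\<lambda>z. F z - blinfun_apply A0 z) has_derivative (\<lambda>v. blinfun_apply (DF z) v - blinfun_apply A0 v)) (at z)"
      by (intro has_derivative_diff) (auto intro: bounded_linear.has_derivative blinfun.bounded_linear_right has_derivative_ident)
    then show "((\<lambda>z. F z - blinfun_apply A0 z) has_derivative (\<lambda>v. blinfun_apply (DF z) v - blinfun_apply A0 v)) (at z within ball a r)"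
      by (rule has_derivative_at_withinI)
    show "onorm (\<lambda>v. blinfun_apply (DF z) v - blinfun_apply A0 v) \<le> \<delta>"
      using bnd z onorm_diff_blin by simp
  qed
  then show ?thesis by simp
qed

lemma core1:
  fixes F :: "R2 \<Rightarrow> R2" and DF :: "R2 \<Rightarrow> R2 \<Rightarrow>\<^sub>L R2"
  assumes deriv: "\<forall>z\<in>ball a r. (F has_derivative blinfun_apply (DF z)) (at z)"
    and bnd: "\<forall>z\<in>ball a r. norm (DF z - A0) \<le> 1/2"
    and Fa: "F a = a" and b: "b \<in> ball a r" and Fb: "F b = b" and t: "0 \<le> t" "t \<le> 1"
  shows "norm (F ((1-t) *\<^sub>R a + t *\<^sub>R b) - a) \<le> norm (b - a)"
proof -
  define L where "L = blinfun_apply A0"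
  define z where "z = (1-t) *\<^sub>R a + t *\<^sub>R b"
  have ar: "a \<in> ball a r" using b by (simp add: dist_norm) (metis norm_ge_zero order.strict_trans1)
  have zb: "z \<in> ball a r"
    using convex_ball[of a r] ar b t unfolding convex_def z_def by auto
  define E1 where "E1 = (F z - L z) - (F b - L b)"
  define E2 where "E2 = (F b - L b) - (F a - L a)"
  have n1: "norm E1 \<le> 1/2 * norm (z - b)" unfolding E1_def L_def by (rule lin_bound[OF deriv bnd zb b])
  have n2: "norm E2 \<le> 1/2 * norm (b - a)" unfolding E2_def L_def by (rule lin_bound[OF deriv bnd b ar])
  have zmb: "z - b = (1-t) *\<^sub>R (a - b)" unfolding z_def by (simp add: algebra_simps)
  have nzb: "norm (z - b) = (1-t) * norm (b - a)" using t unfolding zmb by (simp add: norm_minus_commute)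
  have Lz: "L z = (1-t) *\<^sub>R L a + t *\<^sub>R L b"
    unfolding z_def L_def by (simp add: blinfun.add_right blinfun.scaleR_right)
  have eq: "F z - a = E1 + t *\<^sub>R (b - a) + (1-t) *\<^sub>R E2"
    unfolding E1_def E2_def Fa Fb Lz by (simp add: algebra_simps)
  have "norm (F z - a) \<le> norm E1 + norm (t *\<^sub>R (b - a)) + norm ((1-t) *\<^sub>R E2)"
    unfolding eq by (rule order_trans[OF norm_triangle_ineq add_right_mono[OF norm_triangle_ineq]])
  also have "\<dots> \<le> 1/2 * ((1-t) * norm (b - a)) + t * norm (b - a) + (1-t) * (1/2 * norm (b - a))"
  proof -
    have n3: "norm ((1-t) *\<^sub>R E2) \<le> (1-t) * (1/2 * norm (b-a))"
    proof -
      have "norm ((1-t) *\<^sub>R E2) = (1-t) * norm E2" using t by simp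
      also have "\<dots> \<le> (1-t) * (1/2 * norm (b-a))" using n2 t by (intro mult_left_mono) auto
      finally show ?thesis .
    qed
    have n4: "norm (t *\<^sub>R (b-a)) = t * norm (b-a)" using t by simp
    have n5: "norm E1 \<le> 1/2 * ((1-t) * norm (b-a))" using n1 nzb by simp
    show ?thesis using n3 n4 n5 by linarith
  qed
  also have "\<dots> = norm (b - a)" by (simp add: field_simps)
  finally show ?thesis unfolding z_def .
qed

lemma core2:
  fixes G :: "R2 \<Rightarrow> R2" and DG :: "R2 \<Rightarrow> R2 \<Rightarrow>\<^sub>L R2"
  assumes deriv: "\<forall>z\<in>ball a r. (G has_derivative blinfun_apply (DG z)) (at z)"
    and bnd: "\<forall>z\<in>ball a r. norm (DG z - A0) \<le> \<delta>"
    and low: "\<forall>s\<in>{0..1}. \<forall>w. c * norm w \<le> norm ((1-s) *\<^sub>R w + s *\<^sub>R blinfun_apply A0 w)"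
    and dc: "\<delta> < c" and p: "p \<in> ball a r" and q: "q = (1-s) *\<^sub>R p + s *\<^sub>R G p"
    and s: "0 \<le> s" "s \<le> 1" and qb: "q \<in> ball a r" and Gq: "G q = q"
  shows "G p = p"
proof (rule ccontr)
  assume ne: "G p \<noteq> p"
  define w where "w = G p - p"
  define L where "L = blinfun_apply A0"
  have wn: "norm w > 0" using ne w_def by simp
  have d0: "\<delta> \<ge> 0" using bnd p norm_ge_zero order_trans by blast
  have qp: "q - p = s *\<^sub>R w" unfolding q w_def by (simp add: algebra_simps)
  have nb: "norm ((G p - L p) - (G q - L q)) \<le> \<delta> * norm (p - q)"
    unfolding L_def by (rule lin_bound[OF deriv bnd p qb])
  have eq: "(G p - L p) - (G q - L q) = (1-s) *\<^sub>R w + s *\<^sub>R L w"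
  proof -
    have "L q - L p = s *\<^sub>R L w" unfolding L_def using qp
      by (metis blinfun.diff_right blinfun.scaleR_right)
    moreover have "G p - G q = (1-s) *\<^sub>R w" using Gq qp unfolding w_def by (simp add: algebra_simps)
    ultimately show ?thesis by (simp add: algebra_simps)
  qed
  have "norm (p - q) = s * norm w"
  proof -
    have "norm (p - q) = norm (q - p)" by (rule norm_minus_commute)
    then show ?thesis using qp s by simp
  qed
  also have "\<dots> \<le> norm w" using s by (simp add: mult_left_le_one_le)
  finally have npq: "norm (p - q) \<le> norm w" .
  have "c * norm w \<le> norm ((1-s) *\<^sub>R w + s *\<^sub>R L w)" using low s unfolding L_def by auto
  also have "\<dots> \<le> \<delta> * norm (p - q)" using nb eq by simp
  also have "\<dots> \<le> \<delta> * norm w" using npq d0 by (rule mult_left_mono)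
  finally have "c * norm w \<le> \<delta> * norm w" .
  then show False using dc wn by simp
qed

lemma core_eig:
  fixes F :: "R2 \<Rightarrow> R2" and DF :: "R2 \<Rightarrow> R2 \<Rightarrow>\<^sub>L R2"
  assumes deriv: "\<forall>z\<in>ball a r. (F has_derivative blinfun_apply (DF z)) (at z)"
    and bnd: "\<forall>z\<in>ball a r. norm (DF z - A0) \<le> \<delta>"
    and low: "\<forall>w. c * norm w \<le> norm (blinfun_apply A0 w - w)"
    and dc: "\<delta> < c" and Fa: "F a = a" and b: "b \<in> ball a r" and Fb: "F b = b"
  shows "b = a"
proof (rule ccontr)
  assume ne: "b \<noteq> a"
  have ar: "a \<in> ball a r" using b by (simp add: dist_norm) (metis norm_ge_zero order.strict_trans1)
  have nb: "norm ((F b - blinfun_apply A0 b) - (F a - blinfun_apply A0 a)) \<le> \<delta> * norm (b - a)"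
    by (rule lin_bound[OF deriv bnd b ar])
  have "(F b - blinfun_apply A0 b) - (F a - blinfun_apply A0 a) = -(blinfun_apply A0 (b - a) - (b - a))"
    using Fa Fb by (simp add: blinfun.diff_right algebra_simps)
  then have "norm (blinfun_apply A0 (b - a) - (b - a)) \<le> \<delta> * norm (b - a)" using nb by (simp add: norm_minus_commute)
  moreover have "c * norm (b - a) \<le> norm (blinfun_apply A0 (b - a) - (b - a))" using low by blast
  ultimately have "c * norm (b - a) \<le> \<delta> * norm (b - a)" by simp
  then show False using dc ne by simp
qed


lemma ball_conv:
  fixes a u v :: R2
  assumes "u \<in> ball a r" "v \<in> ball a r" "0 \<le> t" "t \<le> 1"
  shows "(1-t) *\<^sub>R u + t *\<^sub>R v \<in> ball a r"
  using convex_ball[of a r] assms unfolding convex_def by auto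

lemma self_in_nbhd:
  assumes "C1_diffeo A f" "C1_nbhd_data A f F \<eta>"
  shows "f \<in> C1_basic_nbhd A f F \<eta>"
  using assms unfolding C1_basic_nbhd_def C1_nbhd_data_def by (force simp: onorm_zero)

lemma chart_ball_D:
  assumes "is_chart U \<phi>" "p \<in> chart_ball (U, \<phi>) x \<epsilon>"
  shows "p \<in> U" "\<phi> p \<in> ball (\<phi> x) \<epsilon>" "inv_into U \<phi> (\<phi> p) = p"
  using assms chart_inv_in[OF assms(1)] chart_finv[OF assms(1)] chart_invf[OF assms(1)]
  unfolding chart_ball_def by auto

lemma chart_ball_I:
  assumes "is_chart U \<phi>" "z \<in> ball (\<phi> x) \<epsilon>" "z \<in> \<phi> ` U"
  shows "inv_into U \<phi> z \<in> chart_ball (U, \<phi>) x \<epsilon>"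
  using assms unfolding chart_ball_def by auto

theorem lemma3p7:
  fixes A :: "'a::t2_space chartT set" and g0 :: nat and f :: "'a \<Rightarrow> 'a" and x :: 'a
    and U :: "'a set" and \<phi> :: "'a \<Rightarrow> R2"
  assumes surf: "closed_oriented_surface_genus A g0" and genus: "g0 \<ge> 2"
    and f: "f \<in> Diff0 A"
    and acc: "x islimpt Fix f"
    and chart: "compatible_chart A (U, \<phi>)" and xU: "x \<in> U"
  shows "\<exists>\<epsilon>0>0. \<forall>\<epsilon>. 0 < \<epsilon> \<and> \<epsilon> < \<epsilon>0 \<longrightarrow>
     (\<forall>y \<in> Fix f \<inter> chart_ball (U, \<phi>) x \<epsilon>. f ` seg (U, \<phi>) x y \<subseteq> chart_ball (U, \<phi>) x \<epsilon>) \<and>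
     (\<exists>W. C1_nbhd_in_Diff0 A f W \<and>
        (\<forall>g\<in>W. \<forall>p. p \<notin> Fix g \<and> p \<in> chart_ball (U, \<phi>) x \<epsilon> \<and> g p \<in> chart_ball (U, \<phi>) x \<epsilon>
           \<longrightarrow> seg (U, \<phi>) p (g p) \<inter> Fix g = {})) \<and>
     (\<forall>y \<in> Fix f \<inter> chart_ball (U, \<phi>) x \<epsilon>.
        homotopy_rel (Fix f) (seg_path (U, \<phi>) x y) (f \<circ> seg_path (U, \<phi>) x y)
          (straight_homotopy (U, \<phi>) (seg_path (U, \<phi>) x y) (f \<circ> seg_path (U, \<phi>) x y)))"
proof -
  have at: "oriented_C1_atlas A" using surf unfolding closed_oriented_surface_genus_def by blast
  have fd: "C1_diffeo A f" using f unfolding Diff0_def by blast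
  have fcont: "continuous_on UNIV f" by (rule C1_diffeo_cont[OF fd])
  have clF: "closed (Fix f)" unfolding Fix_def
    using closed_Collect_eq[OF fcont continuous_on_id] by (simp add: id_def)
  have fx: "f x = x" using acc clF closed_limpt unfolding Fix_def by blast
  obtain c where cA: "c \<in> A" and xc: "x \<in> fst c" using atlas_cover[OF at] by blast
  have cphi: "is_chart U \<phi>" using chart unfolding compatible_chart_def by simp
  have cc: "is_chart (fst c) (snd c)" using atlas_chart[OF at cA] .
  define a where "a = \<phi> x"
  define a' where "a' = snd c x"
  define i\<phi> where "i\<phi> = inv_into U \<phi>"
  define Fh where "Fh = local_rep (U,\<phi>) (U,\<phi>) f"
  have cC1: "C1_on (overlap_dom (U,\<phi>) c) (transition (U,\<phi>) c)"
     "C1_on (overlap_dom c (U,\<phi>)) (transition c (U,\<phi>))"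
    using chart cA unfolding compatible_chart_def by auto
  obtain D1 where D1: "\<forall>z\<in>overlap_dom (U,\<phi>) c. (transition (U,\<phi>) c has_derivative blinfun_apply (D1 z)) (at z)"
       "continuous_on (overlap_dom (U,\<phi>) c) D1"
    using cC1(1) unfolding C1_on_def by blast
  obtain D2 where D2: "\<forall>z\<in>overlap_dom c (U,\<phi>). (transition c (U,\<phi>) has_derivative blinfun_apply (D2 z)) (at z)"
       "continuous_on (overlap_dom c (U,\<phi>)) D2"
    using cC1(2) unfolding C1_on_def by blast
  obtain Df where Df: "\<forall>z\<in>snd c ` (fst c \<inter> f -` fst c). (local_rep c c f has_derivative blinfun_apply (Df z)) (at z)"
       "continuous_on (snd c ` (fst c \<inter> f -` fst c)) Df"
    using rep_C1[OF fd cA cA] unfolding C1_on_def by blast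
  define A0 where "A0 = D2 a' o\<^sub>L (Df a' o\<^sub>L D1 a)"
  have LCL': "\<exists>\<epsilon>1>0. \<exists>K \<eta>. C1_nbhd_data A f {(c,c,K)} \<eta> \<and>
     (\<forall>g\<in>C1_basic_nbhd A f {(c,c,K)} \<eta>. \<forall>z\<in>ball a \<epsilon>1.
        z \<in> \<phi> ` U \<and> g (i\<phi> z) \<in> U \<and>
        (\<exists>L. (local_rep (U,\<phi>) (U,\<phi>) g has_derivative blinfun_apply L) (at z) \<and> norm (L - A0) \<le> \<kappa>))"
    if "\<kappa> > 0" for \<kappa>
    using LCL[OF at chart cA xU xc fd fx D1 D2 Df that] unfolding A0_def a_def a'_def i\<phi>_def by blast
  have repv: "local_rep (U,\<phi>) (U,\<phi>) g z = \<phi> (g (i\<phi> z))" for g z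
    unfolding local_rep_def i\<phi>_def by simp
  have Fha: "Fh a = a" unfolding Fh_def repv a_def i\<phi>_def using chart_invf[OF cphi xU] fx by simp
  have detA0: "det (matrix (blinfun_apply A0)) > 0"
  proof -
    have aO: "a \<in> overlap_dom (U,\<phi>) c" unfolding overlap_dom_def a_def using xU xc by auto
    have a'O: "a' \<in> overlap_dom c (U,\<phi>)" unfolding overlap_dom_def a'_def using xU xc by auto
    have T1a: "transition (U,\<phi>) c a = a'" unfolding a_def a'_def using trans_val[of "(U,\<phi>)" x c] cphi xU by simp
    have chain: "(transition c (U,\<phi>) \<circ> transition (U,\<phi>) c has_derivative blinfun_apply (D2 a') \<circ> blinfun_apply (D1 a)) (at a)"
      by (rule diff_chain_at) (use D1 D2 aO a'O T1a in auto)
    have oO: "open (overlap_dom (U,\<phi>) c)" unfolding overlap_dom_def prod.sel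
      by (rule chart_open_map[OF cphi]) (use chart_openU[OF cphi] chart_openU[OF cc] in auto)
    have idc: "(transition c (U,\<phi>) \<circ> transition (U,\<phi>) c) y = y" if yin: "y \<in> overlap_dom (U,\<phi>) c" for y
    proof -
      obtain p where p: "p \<in> U" "p \<in> fst c" "y = \<phi> p" using yin unfolding overlap_dom_def by auto
      have "transition (U,\<phi>) c y = snd c p" using trans_val[of "(U,\<phi>)" p c] cphi p by simp
      moreover have "transition c (U,\<phi>) (snd c p) = \<phi> p" using trans_val[of c p "(U,\<phi>)"] cc p by simp
      ultimately show ?thesis using p by simp
    qed
    have "blinfun_apply (D2 a') \<circ> blinfun_apply (D1 a) = id"
      by (rule deriv_unique_id[OF chain oO aO idc])
    then have d21: "det (matrix (blinfun_apply (D2 a'))) * det (matrix (blinfun_apply (D1 a))) = 1"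
      using det_comp_blin[of "D2 a'" "D1 a"] by (simp add: matrix_id_mat_1)
    have a'f: "a' \<in> snd c ` (fst c \<inter> f -` fst c)" unfolding a'_def using xc fx by auto
    have "frechet_derivative (local_rep c c f) (at a') = blinfun_apply (Df a')"
      using Df(1) a'f by (metis frechet_derivative_at)
    then have dDf: "det (matrix (blinfun_apply (Df a'))) > 0"
      using orient[OF at f fx cA xc] a'_def by simp
    have "det (matrix (blinfun_apply A0)) = det (matrix (blinfun_apply (D2 a'))) *
        (det (matrix (blinfun_apply (Df a'))) * det (matrix (blinfun_apply (D1 a))))"
    proof -
      have "blinfun_apply A0 = blinfun_apply (D2 a') \<circ> blinfun_apply (Df a' o\<^sub>L D1 a)"
        unfolding A0_def by (simp add: blinfun_compose.rep_eq)
      moreover have "blinfun_apply (Df a' o\<^sub>L D1 a) = blinfun_apply (Df a') \<circ> blinfun_apply (D1 a)"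
        by (simp add: blinfun_compose.rep_eq)
      ultimately show ?thesis using det_comp_blin by metis
    qed
    also have "\<dots> = det (matrix (blinfun_apply (Df a')))" using d21 by (simp add: algebra_simps)
    finally show ?thesis using dDf by simp
  qed

  have eig: "(ent A0 1 1 - 1)*(ent A0 2 2 - 1) - ent A0 1 2 * ent A0 2 1 = 0"
  proof (rule ccontr)
    assume ne: "(ent A0 1 1 - 1)*(ent A0 2 2 - 1) - ent A0 1 2 * ent A0 2 1 \<noteq> 0"
    obtain c1 where c1: "c1 > 0" "\<forall>w. c1 * norm w \<le> norm (blinfun_apply A0 w - w)"
      using lower_I[OF ne] by blast
    obtain \<epsilon>1 K \<eta> where ep: "\<epsilon>1 > 0" and nd: "C1_nbhd_data A f {(c,c,K)} \<eta>"
      and P: "\<forall>g\<in>C1_basic_nbhd A f {(c,c,K)} \<eta>. \<forall>z\<in>ball a \<epsilon>1.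
        z \<in> \<phi> ` U \<and> g (i\<phi> z) \<in> U \<and>
        (\<exists>L. (local_rep (U,\<phi>) (U,\<phi>) g has_derivative blinfun_apply L) (at z) \<and> norm (L - A0) \<le> c1/2)"
      using LCL'[OF half_gt_zero[OF c1(1)]] by blast
    have fin: "f \<in> C1_basic_nbhd A f {(c,c,K)} \<eta>" by (rule self_in_nbhd[OF fd nd])
    have "\<forall>z\<in>ball a \<epsilon>1. \<exists>L. (Fh has_derivative blinfun_apply L) (at z) \<and> norm (L - A0) \<le> c1/2"
      using P fin unfolding Fh_def by blast
    from bchoice[OF this] obtain DF where DF: "\<forall>z\<in>ball a \<epsilon>1. (Fh has_derivative blinfun_apply (DF z)) (at z) \<and> norm (DF z - A0) \<le> c1/2"
      by blast
    have oV: "open (\<phi> -` ball a \<epsilon>1 \<inter> U)"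
      using iffD1[OF continuous_on_open_vimage[OF chart_openU[OF cphi]] chart_cont[OF cphi], rule_format, OF open_ball] .
    have xV: "x \<in> \<phi> -` ball a \<epsilon>1 \<inter> U" using xU ep a_def by simp
    obtain y where y: "y \<in> Fix f" "y \<in> \<phi> -` ball a \<epsilon>1 \<inter> U" "y \<noteq> x"
      using acc[unfolded islimpt_def, rule_format, OF xV oV] by (elim bexE conjE)
    have fy: "f y = y" using y(1) unfolding Fix_def by simp
    have Fhb: "Fh (\<phi> y) = \<phi> y" unfolding Fh_def repv i\<phi>_def using chart_invf[OF cphi] y fy by simp
    have DFa: "\<forall>z\<in>ball a \<epsilon>1. (Fh has_derivative blinfun_apply (DF z)) (at z)"
      "\<forall>z\<in>ball a \<epsilon>1. norm (DF z - A0) \<le> c1/2" using DF by auto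
    have yb: "\<phi> y \<in> ball a \<epsilon>1" using y(2) by simp
    have "c1/2 < c1" using c1(1) by simp
    have "\<phi> y = a" by (rule core_eig[OF DFa c1(2) \<open>c1/2 < c1\<close> Fha yb Fhb])
    then have "y = x" using chart_inj[OF cphi] xU y a_def by (metis IntD2 inj_onD)
    then show False using y by simp
  qed
  obtain cM where cM: "cM > 0" "\<forall>s\<in>{0..1}. \<forall>w. cM * norm w \<le> norm ((1-s) *\<^sub>R w + s *\<^sub>R blinfun_apply A0 w)"
    using lower_M[OF detA0 eig] by blast
  define \<kappa> where "\<kappa> = min (1/2) (cM/2)"
  have k0: "\<kappa> > 0" unfolding \<kappa>_def using cM by simp
  have k1: "\<kappa> \<le> 1/2" "\<kappa> < cM" unfolding \<kappa>_def using cM by auto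
  obtain \<epsilon>1 K \<eta> where ep: "\<epsilon>1 > 0" and nd: "C1_nbhd_data A f {(c,c,K)} \<eta>"
    and P: "\<forall>g\<in>C1_basic_nbhd A f {(c,c,K)} \<eta>. \<forall>z\<in>ball a \<epsilon>1.
      z \<in> \<phi> ` U \<and> g (i\<phi> z) \<in> U \<and>
      (\<exists>L. (local_rep (U,\<phi>) (U,\<phi>) g has_derivative blinfun_apply L) (at z) \<and> norm (L - A0) \<le> \<kappa>)"
    using LCL'[OF k0] by blast
  define W where "W = C1_basic_nbhd A f {(c,c,K)} \<eta> \<inter> Diff0 A"
  have fW: "f \<in> W" unfolding W_def using self_in_nbhd[OF fd nd] f by blast
  have WN: "C1_nbhd_in_Diff0 A f W" unfolding C1_nbhd_in_Diff0_def W_def using nd by blast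
  have gU: "z \<in> \<phi> ` U \<and> g (i\<phi> z) \<in> U" if "g \<in> W" "z \<in> ball a \<epsilon>1" for g z
    using P that unfolding W_def by blast
  have Gder: "\<exists>DG. \<forall>z\<in>ball a \<epsilon>1. (local_rep (U,\<phi>) (U,\<phi>) g has_derivative blinfun_apply (DG z)) (at z) \<and> norm (DG z - A0) \<le> \<kappa>"
    if "g \<in> W" for g
  proof -
    have "\<forall>z\<in>ball a \<epsilon>1. \<exists>L. (local_rep (U,\<phi>) (U,\<phi>) g has_derivative blinfun_apply L) (at z) \<and> norm (L - A0) \<le> \<kappa>"
      using P that unfolding W_def by blast
    then show ?thesis by (rule bchoice)
  qed
  obtain DF where DF: "\<forall>z\<in>ball a \<epsilon>1. (Fh has_derivative blinfun_apply (DF z)) (at z) \<and> norm (DF z - A0) \<le> \<kappa>"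
    using Gder[OF fW] unfolding Fh_def by blast
  have DF1: "\<forall>z\<in>ball a \<epsilon>1. (Fh has_derivative blinfun_apply (DF z)) (at z)" using DF by blast
  have DF2: "\<forall>z\<in>ball a \<epsilon>1. norm (DF z - A0) \<le> 1/2" using DF k1 by force
  have part2: "seg (U, \<phi>) p (g p) \<inter> Fix g = {}"
    if e: "0 < \<epsilon>" "\<epsilon> < \<epsilon>1" and gW: "g \<in> W" and pp: "p \<notin> Fix g" "p \<in> chart_ball (U, \<phi>) x \<epsilon>" "g p \<in> chart_ball (U, \<phi>) x \<epsilon>"
    for \<epsilon> g p
  proof (rule equals0I)
    fix q assume q: "q \<in> seg (U, \<phi>) p (g p) \<inter> Fix g"
    obtain DG where DG: "\<forall>z\<in>ball a \<epsilon>1. (local_rep (U,\<phi>) (U,\<phi>) g has_derivative blinfun_apply (DG z)) (at z) \<and> norm (DG z - A0) \<le> \<kappa>"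
      using Gder[OF gW] by blast
    define G where "G = local_rep (U,\<phi>) (U,\<phi>) g"
    obtain s where s: "s \<in> {0..1}" "q = seg_path (U, \<phi>) p (g p) s" using q unfolding seg_def by blast
    have gq: "g q = q" using q unfolding Fix_def by simp
    have sub: "ball a \<epsilon> \<subseteq> ball a \<epsilon>1" using e by auto
    have pU: "p \<in> U" "\<phi> p \<in> ball a \<epsilon>" "i\<phi> (\<phi> p) = p" using chart_ball_D[OF cphi pp(2)] a_def i\<phi>_def by auto
    have gpU: "g p \<in> U" "\<phi> (g p) \<in> ball a \<epsilon>" using chart_ball_D[OF cphi pp(3)] a_def by auto
    define Q where "Q = (1-s) *\<^sub>R \<phi> p + s *\<^sub>R \<phi> (g p)"
    have Qb: "Q \<in> ball a \<epsilon>" unfolding Q_def using ball_conv pU gpU s by auto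
    have QU: "Q \<in> \<phi> ` U" using gU[OF gW] Qb sub by blast
    have qQ: "q = i\<phi> Q" using s unfolding seg_path_def Q_def i\<phi>_def by simp
    have phq: "\<phi> q = Q" using qQ chart_finv[OF cphi QU] i\<phi>_def by simp
    have GQ: "G Q = Q" unfolding G_def repv using qQ gq phq by simp
    have GP: "G (\<phi> p) = \<phi> (g p)" unfolding G_def repv using pU by simp
    have "G (\<phi> p) = \<phi> p"
      by (rule core2[of a \<epsilon>1 G DG A0 \<kappa> cM "\<phi> p" Q s])
         (use DG cM k1 pU sub Qb GQ GP s Q_def G_def in auto)
    then have "g p = p" using GP chart_inj[OF cphi] pU gpU by (metis inj_onD)
    then show False using pp(1) unfolding Fix_def by simp
  qed
  have segf: "(1-t) *\<^sub>R a + t *\<^sub>R \<phi> y \<in> ball a \<epsilon> \<and> (1-t) *\<^sub>R a + t *\<^sub>R \<phi> y \<in> \<phi> ` U \<and>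
      f (i\<phi> ((1-t) *\<^sub>R a + t *\<^sub>R \<phi> y)) \<in> U \<and>
      Fh ((1-t) *\<^sub>R a + t *\<^sub>R \<phi> y) \<in> ball a \<epsilon> \<and> Fh ((1-t) *\<^sub>R a + t *\<^sub>R \<phi> y) \<in> \<phi> ` U \<and>
      i\<phi> (Fh ((1-t) *\<^sub>R a + t *\<^sub>R \<phi> y)) = f (i\<phi> ((1-t) *\<^sub>R a + t *\<^sub>R \<phi> y))"
    if e: "0 < \<epsilon>" "\<epsilon> < \<epsilon>1" and y: "y \<in> Fix f \<inter> chart_ball (U, \<phi>) x \<epsilon>" and t: "0 \<le> t" "t \<le> 1"
    for \<epsilon> y t
  proof -
    define z where "z = (1-t) *\<^sub>R a + t *\<^sub>R \<phi> y"
    have sub: "ball a \<epsilon> \<subseteq> ball a \<epsilon>1" using e by auto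
    have yU: "y \<in> U" "\<phi> y \<in> ball a \<epsilon>" "i\<phi> (\<phi> y) = y" using chart_ball_D[OF cphi, of y x \<epsilon>] y a_def i\<phi>_def by auto
    have fy: "f y = y" using y unfolding Fix_def by simp
    have ab: "a \<in> ball a \<epsilon>" using e by simp
    have zb: "z \<in> ball a \<epsilon>" unfolding z_def using ball_conv[OF ab yU(2) t] .
    have zU: "z \<in> \<phi> ` U" and fzU: "f (i\<phi> z) \<in> U" using gU[OF fW] zb sub by auto
    have Fhb: "Fh (\<phi> y) = \<phi> y" unfolding Fh_def repv using yU fy by simp
    have yb1: "\<phi> y \<in> ball a \<epsilon>1" using yU sub by blast
    have "norm (Fh z - a) \<le> norm (\<phi> y - a)"
      unfolding z_def by (rule core1[OF DF1 DF2 Fha yb1 Fhb t])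
    moreover have "norm (\<phi> y - a) < \<epsilon>" using yU(2) by (simp add: dist_norm norm_minus_commute)
    ultimately have Fzb: "Fh z \<in> ball a \<epsilon>" by (simp add: dist_norm norm_minus_commute)
    have Fz: "Fh z = \<phi> (f (i\<phi> z))" unfolding Fh_def repv ..
    have FzU: "Fh z \<in> \<phi> ` U" using Fz fzU by blast
    have "i\<phi> (Fh z) = f (i\<phi> z)" using Fz fzU chart_invf[OF cphi] i\<phi>_def by simp
    then show ?thesis using zb zU fzU Fzb FzU unfolding z_def by blast
  qed
  show ?thesis
  proof (rule exI[of _ \<epsilon>1], rule conjI[OF ep], intro allI impI conjI)
    fix \<epsilon> assume e: "0 < \<epsilon> \<and> \<epsilon> < \<epsilon>1"
    have e1: "0 < \<epsilon>" and e2: "\<epsilon> < \<epsilon>1" using e by auto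
    have spv: "seg_path (U,\<phi>) x y t = i\<phi> ((1-t) *\<^sub>R a + t *\<^sub>R \<phi> y)" for y t
      unfolding seg_path_def i\<phi>_def a_def by simp
    show "\<forall>y \<in> Fix f \<inter> chart_ball (U, \<phi>) x \<epsilon>. f ` seg (U, \<phi>) x y \<subseteq> chart_ball (U, \<phi>) x \<epsilon>"
    proof (intro ballI subsetI)
      fix y q assume y: "y \<in> Fix f \<inter> chart_ball (U,\<phi>) x \<epsilon>" and q: "q \<in> f ` seg (U,\<phi>) x y"
      obtain t where t: "t \<in> {0..1}" "q = f (seg_path (U,\<phi>) x y t)" using q unfolding seg_def by auto
      have t01: "0 \<le> t" "t \<le> 1" using t by auto
      note sf = segf[OF e1 e2 y t01]
      have "q = i\<phi> (Fh ((1-t) *\<^sub>R a + t *\<^sub>R \<phi> y))" using t spv sf by simp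
      moreover have "i\<phi> (Fh ((1-t) *\<^sub>R a + t *\<^sub>R \<phi> y)) \<in> chart_ball (U,\<phi>) x \<epsilon>"
        unfolding i\<phi>_def by (rule chart_ball_I[OF cphi]) (use sf a_def in auto)
      ultimately show "q \<in> chart_ball (U,\<phi>) x \<epsilon>" by simp
    qed
    show "\<exists>W. C1_nbhd_in_Diff0 A f W \<and>
        (\<forall>g\<in>W. \<forall>p. p \<notin> Fix g \<and> p \<in> chart_ball (U, \<phi>) x \<epsilon> \<and> g p \<in> chart_ball (U, \<phi>) x \<epsilon>
           \<longrightarrow> seg (U, \<phi>) p (g p) \<inter> Fix g = {})"
    proof (intro exI[of _ W] conjI WN ballI allI impI)
      fix g p assume "g \<in> W" "p \<notin> Fix g \<and> p \<in> chart_ball (U, \<phi>) x \<epsilon> \<and> g p \<in> chart_ball (U, \<phi>) x \<epsilon>"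
      then show "seg (U, \<phi>) p (g p) \<inter> Fix g = {}" using part2[OF e1 e2] by blast
    qed
    show "\<forall>y \<in> Fix f \<inter> chart_ball (U, \<phi>) x \<epsilon>.
        homotopy_rel (Fix f) (seg_path (U, \<phi>) x y) (f \<circ> seg_path (U, \<phi>) x y)
          (straight_homotopy (U, \<phi>) (seg_path (U, \<phi>) x y) (f \<circ> seg_path (U, \<phi>) x y))"
    proof
      fix y assume y: "y \<in> Fix f \<inter> chart_ball (U,\<phi>) x \<epsilon>"
      define zz where "zz s = (1-s) *\<^sub>R a + s *\<^sub>R \<phi> y" for s
      define \<gamma> where "\<gamma> = seg_path (U, \<phi>) x y"
      define H where "H = straight_homotopy (U, \<phi>) \<gamma> (f \<circ> \<gamma>)"
      have sf: "zz s \<in> ball a \<epsilon> \<and> zz s \<in> \<phi> ` U \<and> f (i\<phi> (zz s)) \<in> U \<and>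
          Fh (zz s) \<in> ball a \<epsilon> \<and> Fh (zz s) \<in> \<phi> ` U \<and> i\<phi> (Fh (zz s)) = f (i\<phi> (zz s))"
        if "s \<in> {0..1}" for s
        using segf[OF e1 e2 y, of s] that unfolding zz_def by auto
      have gv: "\<gamma> s = i\<phi> (zz s)" for s unfolding \<gamma>_def zz_def spv ..
      have pg: "\<phi> (\<gamma> s) = zz s" if "s \<in> {0..1}" for s
        using gv sf[OF that] chart_finv[OF cphi] i\<phi>_def by simp
      have pfg: "\<phi> (f (\<gamma> s)) = Fh (zz s)" for s unfolding Fh_def repv gv ..
      have Hv: "H t s = i\<phi> ((1-t) *\<^sub>R zz s + t *\<^sub>R Fh (zz s))" if "s \<in> {0..1}" for t s
        unfolding H_def straight_homotopy_def i\<phi>_def using pg[OF that] pfg by simp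
      have fy: "f y = y" using y unfolding Fix_def by simp
      have yU: "y \<in> U" "i\<phi> (\<phi> y) = y" using chart_ball_D[OF cphi, of y x \<epsilon>] y i\<phi>_def by auto
      have Fhy: "Fh (\<phi> y) = \<phi> y" unfolding Fh_def repv using yU fy by simp
      have zz0: "zz 0 = a" and zz1: "zz 1 = \<phi> y" unfolding zz_def by simp_all
      have ia: "i\<phi> a = x" unfolding i\<phi>_def a_def using chart_invf[OF cphi xU] .
      have sub: "ball a \<epsilon> \<subseteq> ball a \<epsilon>1" using e2 by auto
      have cont: "continuous_on ({0..1} \<times> {0..1}) (\<lambda>(t, s). H t s)"
      proof -
        have Fc: "continuous_on (ball a \<epsilon>1) Fh" by (rule deriv_cont_on[OF DF1])
        have cz: "continuous_on ({0..1} \<times> {0..1}) (\<lambda>u::real\<times>real. zz (snd u))"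
          unfolding zz_def by (intro continuous_intros)
        have cFz: "continuous_on ({0..1} \<times> {0..1}) (\<lambda>u::real\<times>real. Fh (zz (snd u)))"
          by (rule continuous_on_compose2[OF Fc cz]) (use sf sub in auto)
        have inner: "continuous_on ({0..1} \<times> {0..1}) (\<lambda>u::real\<times>real. (1 - fst u) *\<^sub>R zz (snd u) + fst u *\<^sub>R Fh (zz (snd u)))"
          by (intro continuous_intros cz cFz)
        have img: "(\<lambda>u::real\<times>real. (1 - fst u) *\<^sub>R zz (snd u) + fst u *\<^sub>R Fh (zz (snd u))) ` ({0..1} \<times> {0..1}) \<subseteq> \<phi> ` U"
        proof
          fix v assume "v \<in> (\<lambda>u::real\<times>real. (1 - fst u) *\<^sub>R zz (snd u) + fst u *\<^sub>R Fh (zz (snd u))) ` ({0..1} \<times> {0..1})"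
          then obtain t s where ts: "t \<in> {0..1}" "s \<in> {0..1}" "v = (1 - t) *\<^sub>R zz s + t *\<^sub>R Fh (zz s)" by auto
          have "v \<in> ball a \<epsilon>" unfolding ts(3) using ball_conv sf[OF ts(2)] ts(1) by auto
          then show "v \<in> \<phi> ` U" using gU[OF fW] sub by blast
        qed
        have outer: "continuous_on ({0..1} \<times> {0..1}) (\<lambda>u::real\<times>real. i\<phi> ((1 - fst u) *\<^sub>R zz (snd u) + fst u *\<^sub>R Fh (zz (snd u))))"
          unfolding i\<phi>_def by (rule continuous_on_compose2[OF chart_cont_inv[OF cphi] inner img])
        show ?thesis
          by (rule continuous_on_eq[OF outer]) (auto simp: Hv)
      qed
      have ends: "\<forall>s\<in>{0..1}. H 0 s = \<gamma> s \<and> H 1 s = (f \<circ> \<gamma>) s"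
      proof
        fix s :: real assume s: "s \<in> {0..1}"
        show "H 0 s = \<gamma> s \<and> H 1 s = (f \<circ> \<gamma>) s" using Hv[OF s] gv sf[OF s] by simp
      qed
      have fixe: "\<forall>t\<in>{0..1}. H t 0 = \<gamma> 0 \<and> H t 1 = \<gamma> 1"
      proof
        fix t :: real assume t: "t \<in> {0..1}"
        have "H t 0 = i\<phi> a" using Hv[of 0 t] zz0 Fha by (simp add: scaleR_collapse)
        moreover have "H t 1 = i\<phi> (\<phi> y)" using Hv[of 1 t] zz1 Fhy by (simp add: scaleR_collapse)
        ultimately show "H t 0 = \<gamma> 0 \<and> H t 1 = \<gamma> 1" using gv zz0 zz1 by simp
      qed
      have rel: "\<forall>t0\<in>{0..1}. \<forall>s\<in>{0..1}. H t0 s \<in> Fix f \<longrightarrow> (\<forall>t\<in>{0..1}. H t s = H t0 s)"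
      proof (intro ballI impI)
        fix t0 s t :: real assume t0: "t0 \<in> {0..1}" and s: "s \<in> {0..1}" and hf: "H t0 s \<in> Fix f" and t: "t \<in> {0..1}"
        define p where "p = \<gamma> s"
        have pz: "p = i\<phi> (zz s)" unfolding p_def gv ..
        show "H t s = H t0 s"
        proof (cases "f p = p")
          case True
          then have "Fh (zz s) = zz s" using pfg pg[OF s] p_def by metis
          then show ?thesis using Hv[OF s] by (simp add: scaleR_collapse)
        next
          case False
          have pcb: "p \<in> chart_ball (U,\<phi>) x \<epsilon>" unfolding pz i\<phi>_def
            by (rule chart_ball_I[OF cphi]) (use sf[OF s] a_def in auto)
          have fpcb: "f p \<in> chart_ball (U,\<phi>) x \<epsilon>"
          proof -
            have "f p = i\<phi> (Fh (zz s))" using sf[OF s] pz by simp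
            then show ?thesis unfolding i\<phi>_def
              using chart_ball_I[OF cphi, of "Fh (zz s)" x \<epsilon>] sf[OF s] a_def by simp
          qed
          have pnf: "p \<notin> Fix f" using False unfolding Fix_def by simp
          have "H t0 s = seg_path (U,\<phi>) p (f p) t0"
            unfolding Hv[OF s] seg_path_def i\<phi>_def using pg[OF s] pfg p_def by simp
          then have "H t0 s \<in> seg (U,\<phi>) p (f p)" unfolding seg_def using t0 by blast
          then have "H t0 s \<in> seg (U,\<phi>) p (f p) \<inter> Fix f" using hf by blast
          then show ?thesis using part2[OF e1 e2 fW pnf pcb fpcb] by blast
        qed
      qed
      show "homotopy_rel (Fix f) (seg_path (U, \<phi>) x y) (f \<circ> seg_path (U, \<phi>) x y)
          (straight_homotopy (U, \<phi>) (seg_path (U, \<phi>) x y) (f \<circ> seg_path (U, \<phi>) x y))"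
        unfolding homotopy_rel_def H_def[symmetric] \<gamma>_def[symmetric] using cont ends fixe rel by blast
    qed
  qed
qed

end
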